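(* Let $\Omega$ be a classical Cartan domain of rank $r$ (setup below). Then its Shilov boundary is \[S_\Omega=\Big\{z\in\mathbb C^d:\ \Delta^{(\ell)}(z,z)=\binom{r}{\ell}\ \text{ for all } 1\le \ell\le r\Big\}.\]
   Context: Let $\Omega\subset\mathbb C^d$ be a classical (irreducible) Cartan domain of rank $r$ in its Harish-Chandra realization, viewed as the open unit ball of a Cartan factor $Z\cong\mathbb C^d$. Let $G$ be the identity component of $\mathrm{Aut}(\Omega)$ and $\mathbb K=\{g\in G: g(0)=0\}$; $\mathbb K$ consists of linear maps and so acts on all of $\mathbb C^d$. There is a Jordan frame $e_1,\dots,e_r$ (pairwise orthogonal minimal tripotents) such that every $z\in\mathbb C^d$ has a polar decomposition $z=k\cdot\sum_{j=1}^r t_je_j$ with $k\in\mathbb K$ and uniquely determined singular numbers $t_1\ge\dots\ge t_r\ge 0$; the spectral norm is $\|z\|=t_1$ and $\Omega=\{z:\|z\|<1\}$. The Shilov boundary of $\Omega$ is $S_\Omega=\{k\cdot e: k\in\mathbb K\}$ where $e=e_1+\dots+e_r$. The Jordan triple determinant $\Delta(z,w)$ is the unique $\mathbb K$-invariant sesqui-analytic polynomial (holomorphic in $z$, antiholomorphic in $w$) with $\Delta(z,z)=\prod_{j=1}^r(1-t_j^2)$. Write $\Delta(z,w)=\sum_{\ell=0}^r(-1)^\ell\Delta^{(\ell)}(z,w)$, where $\Delta^{(\ell)}$ is a sesqui-analytic polynomial homogeneous of bidegree $(\ell,\ell)$ (and $\Delta^{(0)}=1$). *)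

theory Defs
  imports "Jordan_Normal_Form.Determinant" "HOL-Computational_Algebra.Polynomial"
begin

(* Elements of the Cartan factor Z are represented as complex
   matrices of fixed dimensions (type IV: column vectors, i.e. n x 1 matrices). *)

datatype cartan_type =
    TypeI nat nat
  | TypeII nat
  | TypeIII nat
  | TypeIV nat       (* IV_n: Lie ball in C^n, n >= 3 *)

fun valid_cartan :: "cartan_type \<Rightarrow> bool" where
  "valid_cartan (TypeI m n) = (1 \<le> m \<and> m \<le> n)"
| "valid_cartan (TypeII n) = (2 \<le> n)"
| "valid_cartan (TypeIII n) = (1 \<le> n)"
| "valid_cartan (TypeIV n) = (3 \<le> n)"

(* the underlying complex vector space Z = C^d *)
fun cartan_space :: "cartan_type \<Rightarrow> complex mat set" where
  "cartan_space (TypeI m n) = carrier_mat m n"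
| "cartan_space (TypeII n) = {z \<in> carrier_mat n n. transpose_mat z = - z}"
| "cartan_space (TypeIII n) = {z \<in> carrier_mat n n. transpose_mat z = z}"
| "cartan_space (TypeIV n) = carrier_mat n 1"

fun cartan_rank :: "cartan_type \<Rightarrow> nat" where
  "cartan_rank (TypeI m n) = m"
| "cartan_rank (TypeII n) = n div 2"
| "cartan_rank (TypeIII n) = n"
| "cartan_rank (TypeIV n) = 2"

definition adj :: "complex mat \<Rightarrow> complex mat" where
  "adj z = mat (dim_col z) (dim_row z) (\<lambda>(i,j). cnj (z $$ (j,i)))"

definition unitary_mat :: "nat \<Rightarrow> complex mat \<Rightarrow> bool" where
  "unitary_mat n U \<longleftrightarrow> U \<in> carrier_mat n n \<and> U * adj U = 1\<^sub>m n"

definition SO_mat :: "nat \<Rightarrow> complex mat \<Rightarrow> bool" where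
  "SO_mat n A \<longleftrightarrow> (\<exists>B :: real mat. B \<in> carrier_mat n n \<and> B * transpose_mat B = 1\<^sub>m n
                      \<and> det B = 1 \<and> A = map_mat complex_of_real B)"

(* K = identity component of the isotropy group of 0 in Aut(Omega), acting linearly *)
fun cartan_K :: "cartan_type \<Rightarrow> (complex mat \<Rightarrow> complex mat) set" where
  "cartan_K (TypeI m n) = {(\<lambda>z. U * z * V) | U V. unitary_mat m U \<and> unitary_mat n V}"
| "cartan_K (TypeII n) = {(\<lambda>z. U * z * transpose_mat U) | U. unitary_mat n U}"
| "cartan_K (TypeIII n) = {(\<lambda>z. U * z * transpose_mat U) | U. unitary_mat n U}"
| "cartan_K (TypeIV n) = {(\<lambda>z. c \<cdot>\<^sub>m (A * z)) | c A. cmod c = 1 \<and> SO_mat n A}"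

(* the maximal tripotent e = e_1 + ... + e_r of the standard Jordan frame *)
fun cartan_e :: "cartan_type \<Rightarrow> complex mat" where
  "cartan_e (TypeI m n) = mat m n (\<lambda>(i,j). if i = j then 1 else 0)"
| "cartan_e (TypeII n) = mat n n (\<lambda>(i,j). if even i \<and> j = i + 1 then 1
                                         else if even j \<and> i = j + 1 then -1 else 0)"
| "cartan_e (TypeIII n) = 1\<^sub>m n"
| "cartan_e (TypeIV n) = mat n 1 (\<lambda>(i,j). if i = 0 then 1 else 0)"

definition shilov_boundary :: "cartan_type \<Rightarrow> complex mat set" where
  "shilov_boundary C = {k (cartan_e C) | k. k \<in> cartan_K C}"

definition qform :: "complex mat \<Rightarrow> complex" where
  "qform z = (\<Sum>i<dim_row z. (z $$ (i,0))\<^sup>2)"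

definition sesq :: "complex mat \<Rightarrow> complex mat \<Rightarrow> complex" where
  "sesq z w = (\<Sum>i<dim_row z. z $$ (i,0) * cnj (w $$ (i,0)))"

(* Delta_poly C z w is the polynomial  lambda |-> Delta(lambda z, w)
   of the Jordan triple determinant Delta. *)
fun Delta_poly :: "cartan_type \<Rightarrow> complex mat \<Rightarrow> complex mat \<Rightarrow> complex poly" where
  "Delta_poly (TypeI m n) z w =
     (THE p. \<forall>a. poly p a = det (1\<^sub>m m - (a \<cdot>\<^sub>m z) * adj w))"
| "Delta_poly (TypeII n) z w =
     (THE p. poly p 0 = 1 \<and> (\<forall>a. (poly p a)\<^sup>2 = det (1\<^sub>m n - (a \<cdot>\<^sub>m z) * adj w)))"
| "Delta_poly (TypeIII n) z w =
     (THE p. \<forall>a. poly p a = det (1\<^sub>m n - (a \<cdot>\<^sub>m z) * adj w))"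
| "Delta_poly (TypeIV n) z w = [:1, - 2 * sesq z w, qform z * cnj (qform w):]"

definition Delta :: "cartan_type \<Rightarrow> complex mat \<Rightarrow> complex mat \<Rightarrow> complex" where
  "Delta C z w = poly (Delta_poly C z w) 1"

(* Delta^(l)(z,w): the bihomogeneous component of bidegree (l,l), with sign
   convention Delta = sum_l (-1)^l Delta^(l).  Since Delta(lambda z, w) =
   sum_l (-1)^l lambda^l Delta^(l)(z,w), it is (-1)^l times the l-th coefficient. *)
definition Delta_comp :: "cartan_type \<Rightarrow> nat \<Rightarrow> complex mat \<Rightarrow> complex mat \<Rightarrow> complex" where
  "Delta_comp C l z w = (-1)^l * coeff (Delta_poly C z w) l"

end

theory Submission
  imports Defs "Jordan_Normal_Form.Char_Poly"
begin

lemma adj_carrier[simp]: "dim_row (adj A) = dim_col A" "dim_col (adj A) = dim_row A"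
  by (auto simp: adj_def)

lemma adj_carrier_mat[simp]: "A \<in> carrier_mat m n \<Longrightarrow> adj A \<in> carrier_mat n m"
  by (metis adj_carrier carrier_matD carrier_matI)

lemma adj_index[simp]: "i < dim_col A \<Longrightarrow> j < dim_row A \<Longrightarrow> adj A $$ (i,j) = cnj (A $$ (j,i))"
  by (auto simp: adj_def)

lemma adj_adj[simp]: "adj (adj A) = A"
  by (rule eq_matI, auto)

lemma adj_mult: assumes "A \<in> carrier_mat m k" "B \<in> carrier_mat k n"
  shows "adj (A * B) = adj B * adj A"
proof (rule eq_matI)
  fix i j assume ij: "i < dim_row (adj B * adj A)" "j < dim_col (adj B * adj A)"
  then have i: "i < n" and j: "j < m" using assms by auto
  have "adj (A * B) $$ (i,j) = cnj (\<Sum>l<k. A $$ (j,l) * B $$ (l,i))"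
    using assms i j by (auto simp: index_mult_mat scalar_prod_def row_def col_def lessThan_atLeast0)
  also have "\<dots> = (\<Sum>l<k. adj B $$ (i,l) * adj A $$ (l,j))"
    using assms i j by (auto simp: cnj_sum mult.commute intro!: sum.cong)
  also have "\<dots> = (adj B * adj A) $$ (i,j)"
    using assms i j by (auto simp: index_mult_mat scalar_prod_def row_def col_def lessThan_atLeast0)
  finally show "adj (A * B) $$ (i,j) = (adj B * adj A) $$ (i,j)" .
qed (use assms in auto)

lemma adj_one[simp]: "adj (1\<^sub>m n) = 1\<^sub>m n"
  by (rule eq_matI, auto)

lemma adj_zero[simp]: "adj (0\<^sub>m a b) = 0\<^sub>m b a"
  by (rule eq_matI, auto)

lemma adj_transpose: "adj (transpose_mat A) = map_mat cnj A"
  by (rule eq_matI, auto)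

lemma transpose_adj: "transpose_mat (adj A) = map_mat cnj A"
  by (rule eq_matI, auto)

lemma adj_map_cnj: "adj (map_mat cnj A) = transpose_mat A"
  by (rule eq_matI, auto)

lemma map_cnj_mult: assumes "A \<in> carrier_mat m k" "B \<in> carrier_mat k n"
  shows "map_mat cnj (A * B) = map_mat cnj A * map_mat cnj B"
proof (rule eq_matI)
  fix i j assume ij: "i < dim_row (map_mat cnj A * map_mat cnj B)" "j < dim_col (map_mat cnj A * map_mat cnj B)"
  then have i: "i < m" and j: "j < n" using assms by auto
  show "map_mat cnj (A * B) $$ (i,j) = (map_mat cnj A * map_mat cnj B) $$ (i,j)"
    using assms i j by (auto simp: index_mult_mat scalar_prod_def row_def col_def cnj_sum intro!: sum.cong)
qed (use assms in auto)

lemma adj_four_block: assumes "A \<in> carrier_mat n1 m1" "B \<in> carrier_mat n1 m2"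
  "C \<in> carrier_mat n2 m1" "D \<in> carrier_mat n2 m2"
  shows "adj (four_block_mat A B C D) = four_block_mat (adj A) (adj C) (adj B) (adj D)"
  by (rule eq_matI, insert assms, auto)

lemma unitary_adj_mult: assumes "unitary_mat n U" shows "adj U * U = 1\<^sub>m n"
  using assms mat_mult_left_right_inverse[of U n "adj U"] by (auto simp: unitary_mat_def)

lemma unitary_adj: assumes "unitary_mat n U" shows "unitary_mat n (adj U)"
  using assms unitary_adj_mult[OF assms] by (auto simp: unitary_mat_def)

lemma unitary_carrier: "unitary_mat n U \<Longrightarrow> U \<in> carrier_mat n n"
  by (auto simp: unitary_mat_def)

lemma unitary_mult: assumes "unitary_mat n U" "unitary_mat n V" shows "unitary_mat n (U * V)"
proof -
  have U: "U \<in> carrier_mat n n" and V: "V \<in> carrier_mat n n" using assms by (auto simp: unitary_mat_def)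
  have "U * V * adj (U * V) = U * (V * adj V) * adj U"
    using U V by (simp add: adj_mult[OF U V] assoc_mult_mat[of _ n n _ n _ n])
      (metis U V adj_carrier_mat assoc_mult_mat mult_carrier_mat)
  also have "\<dots> = 1\<^sub>m n" using assms U by (simp add: unitary_mat_def)
  finally show ?thesis using U V by (auto simp: unitary_mat_def)
qed

lemma unitary_transpose: assumes "unitary_mat n U" shows "unitary_mat n (transpose_mat U)"
proof -
  have U: "U \<in> carrier_mat n n" using assms by (auto simp: unitary_mat_def)
  have "transpose_mat U * adj (transpose_mat U) = transpose_mat (adj U * U)"
    by (simp add: adj_transpose transpose_mult[of "adj U" n n U n] U transpose_adj)
  also have "\<dots> = 1\<^sub>m n" using unitary_adj_mult[OF assms] by simp
  finally show ?thesis using U by (auto simp: unitary_mat_def)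
qed

lemma unitary_four_block: assumes "unitary_mat n1 A" "unitary_mat n2 B"
  shows "unitary_mat (n1 + n2) (four_block_mat A (0\<^sub>m n1 n2) (0\<^sub>m n2 n1) B)"
proof -
  have A: "A \<in> carrier_mat n1 n1" and B: "B \<in> carrier_mat n2 n2" using assms by (auto simp: unitary_mat_def)
  have "four_block_mat A (0\<^sub>m n1 n2) (0\<^sub>m n2 n1) B * adj (four_block_mat A (0\<^sub>m n1 n2) (0\<^sub>m n2 n1) B)
    = four_block_mat (1\<^sub>m n1) (0\<^sub>m n1 n2) (0\<^sub>m n2 n1) (1\<^sub>m n2)"
    using A B assms
    apply (subst adj_four_block[OF A _ _ B], auto)
    apply (subst mult_four_block_mat[of _ n1 n1 _ n2 _ n2 _ _ n1 _ n2], auto simp: unitary_mat_def)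
    done
  then show ?thesis using A B by (auto simp: unitary_mat_def)
qed

definition orthonormal :: "nat \<Rightarrow> complex vec list \<Rightarrow> bool" where
  "orthonormal n vs \<longleftrightarrow> set vs \<subseteq> carrier_vec n \<and> distinct vs \<and>
     (\<forall>x\<in>set vs. \<forall>y\<in>set vs. x \<bullet>c y = (if x = y then 1 else 0))"

lemma cscalar_expand: fixes x y :: "complex vec" shows "dim_vec y = dim_vec x \<Longrightarrow> x \<bullet>c y = (\<Sum>i<dim_vec x. x $ i * cnj (y $ i))"
  by (simp add: scalar_prod_def lessThan_atLeast0)

definition nrm2 :: "complex vec \<Rightarrow> real" where
  "nrm2 x = (\<Sum>i<dim_vec x. (cmod (x $ i))\<^sup>2)"

lemma cscalar_self: fixes x :: "complex vec" shows "x \<bullet>c x = complex_of_real (nrm2 x)"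
  by (simp add: cscalar_expand nrm2_def complex_mult_cnj cmod_power2)

lemma nrm2_nonneg: "nrm2 x \<ge> 0"
  unfolding nrm2_def by (auto intro: sum_nonneg)

lemma nrm2_zero: assumes "x \<in> carrier_vec n" shows "nrm2 x = 0 \<longleftrightarrow> x = 0\<^sub>v n"
proof
  assume "nrm2 x = 0"
  then have "\<forall>i\<in>{..<dim_vec x}. (cmod (x $ i))\<^sup>2 = 0"
    unfolding nrm2_def by (subst sum_nonneg_eq_0_iff[symmetric], auto)
  then show "x = 0\<^sub>v n" using assms by (intro eq_vecI, auto)
qed (simp add: nrm2_def)

lemma normalize_vec: fixes x :: "complex vec" assumes x: "x \<in> carrier_vec n" "x \<noteq> 0\<^sub>v n"
  shows "\<exists>c. (c \<cdot>\<^sub>v x) \<bullet>c (c \<cdot>\<^sub>v x) = 1 \<and> c \<noteq> 0"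
proof -
  have pos: "nrm2 x > 0" using nrm2_zero[OF x(1)] x(2) nrm2_nonneg[of x] by linarith
  define c where "c = complex_of_real (1 / sqrt (nrm2 x))"
  have "(c \<cdot>\<^sub>v x) \<bullet>c (c \<cdot>\<^sub>v x) = c * cnj c * (x \<bullet>c x)"
    using x by (simp add: cscalar_expand sum_distrib_left algebra_simps)
  also have "\<dots> = 1" using pos unfolding c_def cscalar_self
    by (simp flip: of_real_mult)
  finally show ?thesis using pos by (intro exI[of _ c], auto simp: c_def)
qed

lemma kernel_orth: fixes vs :: "complex vec list" assumes k: "length vs < n" and vs: "set vs \<subseteq> carrier_vec n"
  shows "\<exists>x \<in> carrier_vec n. x \<noteq> 0\<^sub>v n \<and> (\<forall>v\<in>set vs. x \<bullet>c v = 0)"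
proof -
  let ?k = "length vs"
  define c where "c = (\<lambda>i. vec n (\<lambda>j. if i < ?k then cnj (vs ! i $ j) else 0))"
  define A where "A = mat\<^sub>r n n (\<lambda>i. if i = ?k then 0\<^sub>v n else c i)"
  have A: "A \<in> carrier_mat n n" unfolding A_def by auto
  have "det A = 0" unfolding A_def by (rule det_row_0[OF k], auto simp: c_def)
  then obtain x where x: "x \<in> carrier_vec n" "x \<noteq> 0\<^sub>v n" "A *\<^sub>v x = 0\<^sub>v n"
    using det_0_iff_vec_prod_zero[OF A] by auto
  have "x \<bullet>c v = 0" if v: "v \<in> set vs" for v
  proof -
    obtain i where i: "i < ?k" "v = vs ! i" using v by (auto simp: in_set_conv_nth)
    have vi: "v \<in> carrier_vec n" using vs v by auto
    have "0 = (A *\<^sub>v x) $ i" using x i k by auto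
    also have "\<dots> = (\<Sum>j<n. cnj (v $ j) * x $ j)"
      using i k x(1) unfolding A_def c_def
      by (auto simp: scalar_prod_def lessThan_atLeast0 row_def)
    also have "\<dots> = x \<bullet>c v" using x(1) vi by (auto simp: cscalar_expand mult.commute)
    finally show ?thesis by simp
  qed
  then show ?thesis using x by auto
qed

lemma orthonormal_append1: assumes "orthonormal n us" "x \<in> carrier_vec n" "x \<bullet>c x = 1"
  "\<forall>v\<in>set us. x \<bullet>c v = 0"
  shows "orthonormal n (us @ [x])"
proof -
  have nx: "x \<notin> set us" using assms by force
  have "v \<bullet>c x = 0" if "v \<in> set us" for v
  proof -
    have "v \<in> carrier_vec n" using assms that by (auto simp: orthonormal_def)
    then have "v \<bullet>c x = cnj (x \<bullet>c v)" using assms(2)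
      by (simp add: cscalar_expand cnj_sum mult.commute)
    then show ?thesis using assms that by simp
  qed
  then show ?thesis using assms nx unfolding orthonormal_def by auto
qed

lemma orthonormal_complete: assumes "orthonormal n us" "length us \<le> n"
  shows "\<exists>ws. orthonormal n (us @ ws) \<and> length (us @ ws) = n"
  using assms
proof (induct "n - length us" arbitrary: us)
  case 0
  then show ?case by (intro exI[of _ "[]"], auto)
next
  case (Suc d)
  then have lt: "length us < n" by auto
  have sub: "set us \<subseteq> carrier_vec n" using Suc by (auto simp: orthonormal_def)
  obtain x where x: "x \<in> carrier_vec n" "x \<noteq> 0\<^sub>v n" "\<forall>v\<in>set us. x \<bullet>c v = 0"
    using kernel_orth[OF lt sub] by auto
  obtain c where c: "(c \<cdot>\<^sub>v x) \<bullet>c (c \<cdot>\<^sub>v x) = 1" "c \<noteq> 0" using normalize_vec[OF x(1,2)] by auto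
  have "(c \<cdot>\<^sub>v x) \<bullet>c v = c * (x \<bullet>c v)" if "v \<in> set us" for v
    using that sub x(1) by (auto simp: cscalar_expand sum_distrib_left algebra_simps)
  then have o: "orthonormal n (us @ [c \<cdot>\<^sub>v x])"
    using x c by (intro orthonormal_append1[OF Suc(3)], auto)
  have "d = n - length (us @ [c \<cdot>\<^sub>v x])" using Suc(2) by auto
  from Suc(1)[OF this o] lt obtain ws where "orthonormal n (us @ [c \<cdot>\<^sub>v x] @ ws)"
    "length (us @ [c \<cdot>\<^sub>v x] @ ws) = n" by auto
  then show ?case by (intro exI[of _ "[c \<cdot>\<^sub>v x] @ ws"], auto)
qed

lemma orthonormal_perm: "set us = set vs \<Longrightarrow> distinct vs \<Longrightarrow> orthonormal n us \<Longrightarrow> orthonormal n vs"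
  unfolding orthonormal_def by auto

lemma orthonormal_nth: assumes "orthonormal n vs" "i < length vs" "j < length vs"
  shows "vs ! i \<bullet>c vs ! j = (if i = j then 1 else 0)"
  using assms unfolding orthonormal_def by (auto simp: nth_eq_iff_index_eq)

lemma mat_of_cols_index: "i < n \<Longrightarrow> j < length vs \<Longrightarrow> mat_of_cols n vs $$ (i,j) = vs ! j $ i"
  by (simp add: mat_of_cols_def)

lemma orthonormal_unitary: assumes o: "orthonormal n vs" and l: "length vs = n"
  shows "unitary_mat n (mat_of_cols n vs)"
proof -
  let ?W = "mat_of_cols n vs"
  have W: "?W \<in> carrier_mat n n" using l by auto
  have dims: "\<And>i. i < n \<Longrightarrow> vs ! i \<in> carrier_vec n" using o l by (auto simp: orthonormal_def)
  have "adj ?W * ?W = 1\<^sub>m n"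
  proof (rule eq_matI)
    fix i j assume "i < dim_row (1\<^sub>m n)" "j < dim_col (1\<^sub>m n)"
    then have i: "i < n" and j: "j < n" by auto
    have "(adj ?W * ?W) $$ (i,j) = (\<Sum>k<n. cnj (vs ! i $ k) * vs ! j $ k)"
      using i j W l by (auto simp: index_mult_mat scalar_prod_def row_def col_def lessThan_atLeast0 mat_of_cols_def)
    also have "\<dots> = vs ! j \<bullet>c vs ! i" using dims[OF i] dims[OF j]
      by (auto simp: cscalar_expand mult.commute)
    also have "\<dots> = 1\<^sub>m n $$ (i,j)" using orthonormal_nth[OF o, of j i] i j l by auto
    finally show "(adj ?W * ?W) $$ (i,j) = 1\<^sub>m n $$ (i,j)" .
  qed (use W in auto)
  then have "?W * adj ?W = 1\<^sub>m n" using mat_mult_left_right_inverse[of "adj ?W" n ?W] W by auto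
  then show ?thesis using W by (simp add: unitary_mat_def)
qed

lemma unit_eigenvector: fixes H :: "complex mat" assumes H: "H \<in> carrier_mat n n" and n: "n > 0"
  shows "\<exists>lam v. v \<in> carrier_vec n \<and> v \<bullet>c v = 1 \<and> H *\<^sub>v v = lam \<cdot>\<^sub>v v"
proof -
  obtain as where cp: "char_poly H = (\<Prod>a\<leftarrow>as. [:- a, 1:])" "length as = n"
    using char_poly_factorized[OF H] by auto
  then obtain a where a: "a \<in> set as" using n by (cases as, auto)
  have "poly (char_poly H) a = 0" unfolding cp(1) using a
    by (simp add: poly_prod_list prod_list_zero_iff)
  then have "eigenvalue H a" using eigenvalue_root_char_poly[OF H] by auto
  then obtain v where v: "eigenvector H v a" unfolding eigenvalue_def by auto
  then have v': "v \<in> carrier_vec n" "v \<noteq> 0\<^sub>v n" "H *\<^sub>v v = a \<cdot>\<^sub>v v"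
    using H unfolding eigenvector_def by auto
  obtain c where c: "(c \<cdot>\<^sub>v v) \<bullet>c (c \<cdot>\<^sub>v v) = 1" "c \<noteq> 0" using normalize_vec[OF v'(1,2)] by auto
  have "H *\<^sub>v (c \<cdot>\<^sub>v v) = a \<cdot>\<^sub>v (c \<cdot>\<^sub>v v)"
    using v' H by (simp add: mult_mat_vec smult_smult_assoc mult.commute)
  then show ?thesis using c v' by auto
qed

lemma cs_smult_left: fixes x y :: "complex vec" shows "dim_vec y = dim_vec x \<Longrightarrow> (c \<cdot>\<^sub>v x) \<bullet>c y = c * (x \<bullet>c y)"
  by (simp add: cscalar_expand sum_distrib_left algebra_simps)

lemma cs_smult_right: fixes x y :: "complex vec" shows "dim_vec y = dim_vec x \<Longrightarrow> x \<bullet>c (c \<cdot>\<^sub>v y) = cnj c * (x \<bullet>c y)"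
  by (simp add: cscalar_expand sum_distrib_left algebra_simps)

lemma cs_swap: fixes x y :: "complex vec" shows "dim_vec y = dim_vec x \<Longrightarrow> x \<bullet>c y = cnj (y \<bullet>c x)"
  by (simp add: cscalar_expand cnj_sum mult.commute)

lemma cs_conj: fixes x y :: "complex vec" shows "dim_vec y = dim_vec x \<Longrightarrow> conjugate x \<bullet>c conjugate y = y \<bullet>c x"
  by (simp add: scalar_prod_def lessThan_atLeast0 mult.commute)

lemma cs_add_left: fixes x y w :: "complex vec" shows "dim_vec y = dim_vec x \<Longrightarrow> dim_vec w = dim_vec x \<Longrightarrow> (x + y) \<bullet>c w = x \<bullet>c w + y \<bullet>c w"
  by (simp add: cscalar_expand sum.distrib algebra_simps)

lemma map_cnj_mult_vec: fixes A :: "complex mat" shows "dim_vec x = dim_col A \<Longrightarrow> map_mat cnj A *\<^sub>v x = conjugate (A *\<^sub>v conjugate x)"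
  by (rule eq_vecI, auto simp: scalar_prod_def row_def cnj_sum)

lemma adjoint_identity: fixes A :: "complex mat" assumes A: "A \<in> carrier_mat m n" and x: "x \<in> carrier_vec n" and y: "y \<in> carrier_vec m"
  shows "(A *\<^sub>v x) \<bullet>c y = x \<bullet>c (adj A *\<^sub>v y)"
proof -
  have "(A *\<^sub>v x) \<bullet>c y = (\<Sum>i<m. (\<Sum>j<n. A $$ (i,j) * x $ j) * cnj (y $ i))"
    using A x y by (simp add: cscalar_expand scalar_prod_def row_def lessThan_atLeast0)
  also have "\<dots> = (\<Sum>j<n. (\<Sum>i<m. A $$ (i,j) * x $ j * cnj (y $ i)))"
    by (simp add: sum_distrib_right sum.swap[of _ "{..<m}"])
  also have "\<dots> = (\<Sum>j<n. x $ j * cnj (\<Sum>i<m. cnj (A $$ (i,j)) * y $ i))"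
    by (simp add: sum_distrib_left cnj_sum algebra_simps)
  also have "\<dots> = x \<bullet>c (adj A *\<^sub>v y)"
    using A x y by (simp add: cscalar_expand scalar_prod_def row_def lessThan_atLeast0)
  finally show ?thesis .
qed

lemma entry_formula: fixes z :: "complex mat"
  assumes z: "z \<in> carrier_mat m n" and us: "set us \<subseteq> carrier_vec m" and vs: "set vs \<subseteq> carrier_vec n"
  and i: "i < length us" and j: "j < length vs"
  shows "(adj (mat_of_cols m us) * z * mat_of_cols n vs) $$ (i,j) = (z *\<^sub>v vs ! j) \<bullet>c us ! i"
proof -
  let ?W1 = "mat_of_cols m us" and ?W2 = "mat_of_cols n vs"
  have W1: "?W1 \<in> carrier_mat m (length us)" and W2: "?W2 \<in> carrier_mat n (length vs)" by auto
  have ui: "us ! i \<in> carrier_vec m" and vj: "vs ! j \<in> carrier_vec n" using us vs i j by auto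
  have "(adj ?W1 * z * ?W2) = adj ?W1 * (z * ?W2)" using assoc_mult_mat[OF adj_carrier_mat[OF W1] z W2] .
  then have "(adj ?W1 * z * ?W2) $$ (i,j) = row (adj ?W1) i \<bullet> col (z * ?W2) j"
    using i j z W1 W2 by simp
  also have "col (z * ?W2) j = z *\<^sub>v vs ! j" using z W2 j
    by (subst col_mult2[of z m n ?W2 "length vs" j], auto simp: col_mat_of_cols[OF j] vj)
  also have "row (adj ?W1) i = conjugate (us ! i)"
    using i ui by (intro eq_vecI, auto simp: mat_of_cols_def)
  also have "conjugate (us ! i) \<bullet> (z *\<^sub>v vs ! j) = (z *\<^sub>v vs ! j) \<bullet>c us ! i"
    using ui z by (simp add: scalar_prod_def mult.commute)
  finally show ?thesis .
qed

lemma mult5_assoc: fixes A :: "'a::comm_ring_1 mat"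
  assumes A: "A \<in> carrier_mat a b" and B: "B \<in> carrier_mat b c" and C: "C \<in> carrier_mat c d"
  and D: "D \<in> carrier_mat d e" and E: "E \<in> carrier_mat e f"
  shows "A * B * C * (D * E) = A * (B * C * D) * E"
proof -
  have AB: "A * B \<in> carrier_mat a c" using A B by auto
  have ABC: "A * B * C \<in> carrier_mat a d" using AB C by auto
  have BC: "B * C \<in> carrier_mat b d" using B C by auto
  have e1: "A * B * C * (D * E) = A * B * C * D * E" using assoc_mult_mat[OF ABC D E] by simp
  have e2: "A * B * C = A * (B * C)" using assoc_mult_mat[OF A B C] .
  have e3: "A * (B * C) * D = A * (B * C * D)" using assoc_mult_mat[OF A BC D] .
  have e23: "A * B * C * D = A * (B * C * D)" using e2 e3 by simp
  show ?thesis by (simp only: e1 e23)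
qed

definition ul_blk :: "nat \<Rightarrow> nat \<Rightarrow> complex mat \<Rightarrow> complex mat" where
  "ul_blk k l A = mat k l (\<lambda>(i,j). A $$ (i,j))"
definition lr_blk :: "nat \<Rightarrow> nat \<Rightarrow> complex mat \<Rightarrow> complex mat" where
  "lr_blk k l A = mat (dim_row A - k) (dim_col A - l) (\<lambda>(i,j). A $$ (i + k, j + l))"

lemma block_split: fixes A :: "complex mat"
  assumes A: "A \<in> carrier_mat (k1 + k2) (l1 + l2)"
  and z: "\<And>i j. i < k1 + k2 \<Longrightarrow> j < l1 + l2 \<Longrightarrow> (i < k1) \<noteq> (j < l1) \<Longrightarrow> A $$ (i,j) = 0"
  shows "A = four_block_mat (ul_blk k1 l1 A) (0\<^sub>m k1 l2) (0\<^sub>m k2 l1) (lr_blk k1 l1 A)"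
  by (rule eq_matI, insert A z, auto simp: ul_blk_def lr_blk_def)

lemma lr_blk_carrier: "A \<in> carrier_mat (k1 + k2) (l1 + l2) \<Longrightarrow> lr_blk k1 l1 A \<in> carrier_mat k2 l2"
  by (auto simp: lr_blk_def)
lemma ul_blk_carrier: "ul_blk k1 l1 A \<in> carrier_mat k1 l1"
  by (auto simp: ul_blk_def)
lemma lr_blk_index: "A \<in> carrier_mat (k1 + k2) (l1 + l2) \<Longrightarrow> i < k2 \<Longrightarrow> j < l2 \<Longrightarrow> lr_blk k1 l1 A $$ (i,j) = A $$ (i + k1, j + l1)"
  by (auto simp: lr_blk_def)

lemma assemble: fixes W1 W2 :: "complex mat"
  assumes W1: "W1 \<in> carrier_mat (k1 + k2) (k1 + k2)" and W2: "W2 \<in> carrier_mat (l1 + l2) (l1 + l2)"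
  and UA: "UA \<in> carrier_mat k1 k1" and DA: "DA \<in> carrier_mat k1 l1" and VA: "VA \<in> carrier_mat l1 l1"
  and UB: "UB \<in> carrier_mat k2 k2" and DB: "DB \<in> carrier_mat k2 l2" and VB: "VB \<in> carrier_mat l2 l2"
  and z: "z = W1 * four_block_mat (UA * DA * VA) (0\<^sub>m k1 l2) (0\<^sub>m k2 l1) (UB * DB * VB) * W2"
  shows "z = (W1 * four_block_mat UA (0\<^sub>m k1 k2) (0\<^sub>m k2 k1) UB) * four_block_mat DA (0\<^sub>m k1 l2) (0\<^sub>m k2 l1) DB
     * (four_block_mat VA (0\<^sub>m l1 l2) (0\<^sub>m l2 l1) VB * W2)"
proof -
  let ?U = "four_block_mat UA (0\<^sub>m k1 k2) (0\<^sub>m k2 k1) UB"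
  let ?D = "four_block_mat DA (0\<^sub>m k1 l2) (0\<^sub>m k2 l1) DB"
  let ?V = "four_block_mat VA (0\<^sub>m l1 l2) (0\<^sub>m l2 l1) VB"
  have U: "?U \<in> carrier_mat (k1+k2) (k1+k2)" and D: "?D \<in> carrier_mat (k1+k2) (l1+l2)"
    and V: "?V \<in> carrier_mat (l1+l2) (l1+l2)" using UA UB DA DB VA VB by auto
  have "?U * ?D = four_block_mat (UA * DA) (0\<^sub>m k1 l2) (0\<^sub>m k2 l1) (UB * DB)"
    using UA UB DA DB by (subst mult_four_block_mat[OF _ _ _ _ DA _ _ DB], auto)
  moreover have "four_block_mat (UA * DA) (0\<^sub>m k1 l2) (0\<^sub>m k2 l1) (UB * DB) * ?V
     = four_block_mat (UA * DA * VA) (0\<^sub>m k1 l2) (0\<^sub>m k2 l1) (UB * DB * VB)"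
    using UA UB DA DB VA VB by (subst mult_four_block_mat[of _ k1 l1 _ l2 _ k2 _ _ l1 _ l2], auto)
  ultimately have eq: "?U * ?D * ?V = four_block_mat (UA * DA * VA) (0\<^sub>m k1 l2) (0\<^sub>m k2 l1) (UB * DB * VB)"
    by simp
  have "W1 * ?U * ?D * (?V * W2) = W1 * (?U * ?D * ?V) * W2"
    using mult5_assoc[OF W1 U D V W2] .
  then show ?thesis using z eq by simp
qed

lemma adj_mult_vec_carrier: "z \<in> carrier_mat m n \<Longrightarrow> u \<in> carrier_vec m \<Longrightarrow> adj z *\<^sub>v u \<in> carrier_vec n"
  by (metis adj_carrier_mat mult_mat_vec_carrier)

lemma smult_zero_vec': "c \<cdot>\<^sub>v 0\<^sub>v n = (0\<^sub>v n :: 'a :: comm_ring_1 vec)"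
  by (rule eq_vecI, auto)

lemma eig_nrm2: fixes z :: "complex mat"
  assumes z: "z \<in> carrier_mat m n" and u: "u \<in> carrier_vec m" "u \<bullet>c u = 1"
  and e: "(z * adj z) *\<^sub>v u = lam \<cdot>\<^sub>v u"
  shows "lam = complex_of_real (nrm2 (adj z *\<^sub>v u))"
proof -
  have "lam = (lam \<cdot>\<^sub>v u) \<bullet>c u" using u by (simp add: cs_smult_left)
  also have "\<dots> = (z *\<^sub>v (adj z *\<^sub>v u)) \<bullet>c u" using e z u
    by (simp add: assoc_mult_mat_vec[of z m n "adj z" m u])
  also have "\<dots> = (adj z *\<^sub>v u) \<bullet>c (adj z *\<^sub>v u)"
    by (rule adjoint_identity[OF z adj_mult_vec_carrier[OF z u(1)] u(1)])
  finally show ?thesis by (simp add: cscalar_self)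
qed

lemma square_kernel: fixes z :: "complex mat"
  assumes z: "z \<in> carrier_mat n n" and u: "u \<in> carrier_vec n" "u \<noteq> 0\<^sub>v n" and a: "adj z *\<^sub>v u = 0\<^sub>v n"
  shows "\<exists>v \<in> carrier_vec n. v \<noteq> 0\<^sub>v n \<and> z *\<^sub>v v = 0\<^sub>v n"
proof -
  have zt: "transpose_mat z \<in> carrier_mat n n" using z by auto
  have "transpose_mat z *\<^sub>v conjugate u = conjugate (adj z *\<^sub>v u)"
    using z u by (intro eq_vecI, auto simp: scalar_prod_def row_def cnj_sum mult.commute)
  also have "\<dots> = 0\<^sub>v n" using a by simp
  finally have "det (transpose_mat z) = 0" using det_0_iff_vec_prod_zero[OF zt] u
    by (metis carrier_vec_conjugate conjugate_zero_iff_vec)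
  then have "det z = 0" using det_transpose[OF z] by simp
  then show ?thesis using det_0_iff_vec_prod_zero[OF z] by auto
qed

lemma rect_kernel: fixes z :: "complex mat"
  assumes z: "z \<in> carrier_mat m n" and mn: "m \<le> n" and u: "u \<in> carrier_vec m" "u \<noteq> 0\<^sub>v m"
  and a: "adj z *\<^sub>v u = 0\<^sub>v n"
  shows "\<exists>v \<in> carrier_vec n. v \<bullet>c v = 1 \<and> z *\<^sub>v v = 0\<^sub>v m"
proof -
  have "\<exists>v \<in> carrier_vec n. v \<noteq> 0\<^sub>v n \<and> z *\<^sub>v v = 0\<^sub>v m"
  proof (cases "m = n")
    case True then show ?thesis using square_kernel[of z n u] z u a by auto
  next
    case False
    let ?vs = "map (\<lambda>a. conjugate (row z a)) [0..<m]"
    have "length ?vs < n" using False mn by auto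
    moreover have "set ?vs \<subseteq> carrier_vec n" using z by auto
    ultimately obtain x where x: "x \<in> carrier_vec n" "x \<noteq> 0\<^sub>v n" "\<forall>v\<in>set ?vs. x \<bullet>c v = 0"
      using kernel_orth by blast
    have "z *\<^sub>v x = 0\<^sub>v m"
    proof (rule eq_vecI)
      fix i assume "i < dim_vec (0\<^sub>v m)"
      then have i: "i < m" by auto
      then have "x \<bullet>c conjugate (row z i) = 0" using x(3) by auto
      then show "(z *\<^sub>v x) $ i = 0\<^sub>v m $ i" using i z x(1)
        by (auto simp: scalar_prod_def mult.commute)
    qed (use z in auto)
    then show ?thesis using x by auto
  qed
  then obtain v where v: "v \<in> carrier_vec n" "v \<noteq> 0\<^sub>v n" "z *\<^sub>v v = 0\<^sub>v m" by auto
  obtain c where c: "(c \<cdot>\<^sub>v v) \<bullet>c (c \<cdot>\<^sub>v v) = 1" "c \<noteq> 0" using normalize_vec[OF v(1,2)] by auto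
  have "z *\<^sub>v (c \<cdot>\<^sub>v v) = 0\<^sub>v m" using v z by (simp add: mult_mat_vec smult_zero_vec')
  then show ?thesis using c v by (intro bexI[of _ "c \<cdot>\<^sub>v v"], auto)
qed

lemma svd_vec: fixes z :: "complex mat"
  assumes z: "z \<in> carrier_mat m n" and mn: "m \<le> n" and m: "m > 0"
  shows "\<exists>u v sg. u \<in> carrier_vec m \<and> u \<bullet>c u = 1 \<and> v \<in> carrier_vec n \<and> v \<bullet>c v = 1 \<and> sg \<ge> 0
     \<and> z *\<^sub>v v = complex_of_real sg \<cdot>\<^sub>v u \<and> adj z *\<^sub>v u = complex_of_real sg \<cdot>\<^sub>v v"
proof -
  have H: "z * adj z \<in> carrier_mat m m" using z by auto
  obtain lam u where u: "u \<in> carrier_vec m" "u \<bullet>c u = 1" "(z * adj z) *\<^sub>v u = lam \<cdot>\<^sub>v u"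
    using unit_eigenvector[OF H m] by auto
  have u0: "u \<noteq> 0\<^sub>v m" using u(2) by auto
  define y where "y = adj z *\<^sub>v u"
  have y: "y \<in> carrier_vec n" using z u unfolding y_def by (simp add: adj_mult_vec_carrier)
  have lam: "lam = complex_of_real (nrm2 y)" unfolding y_def by (rule eig_nrm2[OF z u])
  show ?thesis
  proof (cases "y = 0\<^sub>v n")
    case True
    obtain v where v: "v \<in> carrier_vec n" "v \<bullet>c v = 1" "z *\<^sub>v v = 0\<^sub>v m"
      using rect_kernel[OF z mn u(1) u0] True unfolding y_def by auto
    show ?thesis using u v True unfolding y_def
      by (intro exI[of _ u] exI[of _ v] exI[of _ 0], auto)
  next
    case False
    have pos: "nrm2 y > 0" using nrm2_zero[OF y] False nrm2_nonneg[of y] by linarith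
    define sg where "sg = sqrt (nrm2 y)"
    have sg: "sg > 0" "sg * sg = nrm2 y" using pos unfolding sg_def by auto
    define v where "v = complex_of_real (1 / sg) \<cdot>\<^sub>v y"
    have v: "v \<in> carrier_vec n" using y unfolding v_def by auto
    have "v \<bullet>c v = complex_of_real (1/sg) * cnj (complex_of_real (1/sg)) * (y \<bullet>c y)"
      unfolding v_def using y by (simp add: cs_smult_left cs_smult_right)
    also have "\<dots> = 1" using sg pos unfolding cscalar_self
      by (simp flip: of_real_mult add: field_simps)
    finally have vv: "v \<bullet>c v = 1" .
    have "z *\<^sub>v v = complex_of_real (1 / sg) \<cdot>\<^sub>v (z *\<^sub>v y)"
      unfolding v_def using z y by (simp add: mult_mat_vec)
    also have "z *\<^sub>v y = lam \<cdot>\<^sub>v u" unfolding y_def using u(3) z u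
      by (simp add: assoc_mult_mat_vec[of z m n "adj z" m u])
    also have "complex_of_real (1 / sg) \<cdot>\<^sub>v (lam \<cdot>\<^sub>v u) = complex_of_real sg \<cdot>\<^sub>v u"
    proof -
      have "complex_of_real (1 / sg) * lam = complex_of_real sg"
      proof -
        have "lam = complex_of_real sg * complex_of_real sg" using lam sg(2) by (metis of_real_mult)
        then show ?thesis using sg by (simp add: field_simps)
      qed
      then show ?thesis unfolding smult_smult_assoc by simp
    qed
    finally have zv: "z *\<^sub>v v = complex_of_real sg \<cdot>\<^sub>v u" .
    have "adj z *\<^sub>v u = complex_of_real sg \<cdot>\<^sub>v v"
      unfolding v_def y_def[symmetric] smult_smult_assoc using sg
      by (simp flip: of_real_mult)
    then show ?thesis using u v vv zv sg
      by (intro exI[of _ u] exI[of _ v] exI[of _ sg], auto)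
  qed
qed

definition Dg :: "nat \<Rightarrow> nat \<Rightarrow> (nat \<Rightarrow> real) \<Rightarrow> complex mat" where
  "Dg m n s = mat m n (\<lambda>(i,j). if i = j then complex_of_real (s i) else 0)"

definition sh :: "real \<Rightarrow> (nat \<Rightarrow> real) \<Rightarrow> nat \<Rightarrow> real" where
  "sh a s i = (if i = 0 then a else s (i - 1))"

lemma Dg_carrier[simp]: "Dg m n s \<in> carrier_mat m n" by (simp add: Dg_def)

lemma Dg_split: "Dg (1 + m) (1 + n) (sh a s) = four_block_mat (Dg 1 1 (\<lambda>_. a)) (0\<^sub>m 1 n) (0\<^sub>m m 1) (Dg m n s)"
  by (rule eq_matI, auto simp: Dg_def sh_def)

lemma conj_back: fixes z :: "complex mat"
  assumes W1: "unitary_mat m W1" and W2: "unitary_mat n W2" and z: "z \<in> carrier_mat m n"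
  shows "W1 * (adj W1 * z * W2) * adj W2 = z"
proof -
  have c1: "W1 \<in> carrier_mat m m" and c2: "W2 \<in> carrier_mat n n" using W1 W2 by (auto simp: unitary_mat_def)
  have a1: "adj W1 \<in> carrier_mat m m" and a2: "adj W2 \<in> carrier_mat n n" using c1 c2 by auto
  have az: "adj W1 * z \<in> carrier_mat m n" using a1 z by auto
  have "W1 * (adj W1 * z * W2) = W1 * (adj W1 * z) * W2" using assoc_mult_mat[OF c1 az c2] by simp
  also have "W1 * (adj W1 * z) = W1 * adj W1 * z" using assoc_mult_mat[OF c1 a1 z] by simp
  also have "W1 * adj W1 = 1\<^sub>m m" using W1 by (simp add: unitary_mat_def)
  finally have e: "W1 * (adj W1 * z * W2) = z * W2" using z by simp
  have "z * W2 * adj W2 = z * (W2 * adj W2)" using assoc_mult_mat[OF z c2 a2] .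
  also have "W2 * adj W2 = 1\<^sub>m n" using W2 by (simp add: unitary_mat_def)
  finally show ?thesis using e z by simp
qed

lemma svd: fixes z :: "complex mat"
  assumes "z \<in> carrier_mat m n" "m \<le> n"
  shows "\<exists>U V s. unitary_mat m U \<and> unitary_mat n V \<and> (\<forall>i. s i \<ge> 0) \<and> z = U * Dg m n s * V"
  using assms
proof (induct m arbitrary: n z)
  case 0
  have "z = 1\<^sub>m 0 * Dg 0 n (\<lambda>_. 0) * 1\<^sub>m n"
    by (rule eq_matI, insert 0, auto)
  moreover have "unitary_mat 0 (1\<^sub>m 0)" "unitary_mat n (1\<^sub>m n)" by (auto simp: unitary_mat_def)
  ultimately show ?case by (intro exI[of _ "1\<^sub>m 0"] exI[of _ "1\<^sub>m n"] exI[of _ "\<lambda>_. 0::real"], auto)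
next
  case (Suc m)
  from Suc obtain n' where n: "n = Suc n'" by (cases n, auto)
  have z: "z \<in> carrier_mat (Suc m) n" using Suc by auto
  obtain u v sg where uv: "u \<in> carrier_vec (Suc m)" "u \<bullet>c u = 1" "v \<in> carrier_vec n" "v \<bullet>c v = 1" "sg \<ge> 0"
     "z *\<^sub>v v = complex_of_real sg \<cdot>\<^sub>v u" "adj z *\<^sub>v u = complex_of_real sg \<cdot>\<^sub>v v"
    using svd_vec[OF z] Suc by auto
  have ou: "orthonormal (Suc m) [u]" and ov: "orthonormal n [v]" using uv by (auto simp: orthonormal_def)
  obtain ws1 where ws1: "orthonormal (Suc m) ([u] @ ws1)" "length ([u] @ ws1) = Suc m"
    using orthonormal_complete[OF ou] by auto
  obtain ws2 where ws2: "orthonormal n ([v] @ ws2)" "length ([v] @ ws2) = n"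
    using orthonormal_complete[OF ov] n by auto
  define us where "us = [u] @ ws1"
  define vs where "vs = [v] @ ws2"
  define W1 where "W1 = mat_of_cols (Suc m) us"
  define W2 where "W2 = mat_of_cols n vs"
  have W1: "unitary_mat (Suc m) W1" unfolding W1_def us_def by (rule orthonormal_unitary[OF ws1])
  have W2: "unitary_mat n W2" unfolding W2_def vs_def by (rule orthonormal_unitary[OF ws2])
  have us: "set us \<subseteq> carrier_vec (Suc m)" "length us = Suc m" "us ! 0 = u"
    using ws1 unfolding us_def orthonormal_def by auto
  have vs: "set vs \<subseteq> carrier_vec n" "length vs = n" "vs ! 0 = v"
    using ws2 unfolding vs_def orthonormal_def by auto
  define z' where "z' = adj W1 * z * W2"
  have z': "z' \<in> carrier_mat (1 + m) (1 + n')" unfolding z'_def W1_def W2_def using z us vs n by auto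
  have ent: "z' $$ (i,j) = (z *\<^sub>v vs ! j) \<bullet>c us ! i" if "i < Suc m" "j < n" for i j
    unfolding z'_def W1_def W2_def using entry_formula[OF z us(1) vs(1)] that us vs by auto
  have col0: "z' $$ (i,0) = (if i = 0 then complex_of_real sg else 0)" if i: "i < Suc m" for i
  proof -
    have ui: "us ! i \<in> carrier_vec (Suc m)" using us i by auto
    have "z' $$ (i,0) = (complex_of_real sg \<cdot>\<^sub>v u) \<bullet>c us ! i" using ent[OF i] n vs uv by auto
    also have "\<dots> = complex_of_real sg * (u \<bullet>c us ! i)" using uv ui by (subst cs_smult_left, auto)
    also have "u \<bullet>c us ! i = (if i = 0 then 1 else 0)"
      using orthonormal_nth[OF ws1(1)[folded us_def], of 0 i] us i by auto
    finally show ?thesis by simp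
  qed
  have row0: "z' $$ (0,j) = (if j = 0 then complex_of_real sg else 0)" if j: "j < n" for j
  proof -
    have vj: "vs ! j \<in> carrier_vec n" using vs j by auto
    have "z' $$ (0,j) = (z *\<^sub>v vs ! j) \<bullet>c u" using ent[OF _ j] us by auto
    also have "\<dots> = vs ! j \<bullet>c (adj z *\<^sub>v u)" by (rule adjoint_identity[OF z vj uv(1)])
    also have "\<dots> = vs ! j \<bullet>c (complex_of_real sg \<cdot>\<^sub>v v)" using uv by simp
    also have "\<dots> = complex_of_real sg * (vs ! j \<bullet>c v)" using uv vj by (subst cs_smult_right, auto)
    also have "vs ! j \<bullet>c v = (if j = 0 then 1 else 0)"
      using orthonormal_nth[OF ws2(1)[folded vs_def], of j 0] vs j by auto
    finally show ?thesis by simp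
  qed
  have split: "z' = four_block_mat (ul_blk 1 1 z') (0\<^sub>m 1 n') (0\<^sub>m m 1) (lr_blk 1 1 z')"
    by (rule block_split[OF z'], insert col0 row0 n, auto)
  have ul: "ul_blk 1 1 z' = 1\<^sub>m 1 * Dg 1 1 (\<lambda>_. sg) * 1\<^sub>m 1"
    by (rule eq_matI, auto simp: ul_blk_def Dg_def col0)
  have B: "lr_blk 1 1 z' \<in> carrier_mat m n'" using lr_blk_carrier[OF z'] .
  obtain UB VB s where IH: "unitary_mat m UB" "unitary_mat n' VB" "\<forall>i. s i \<ge> 0"
    "lr_blk 1 1 z' = UB * Dg m n' s * VB"
    using Suc(1)[OF B] Suc(3) n by auto
  have cUB: "UB \<in> carrier_mat m m" and cVB: "VB \<in> carrier_mat n' n'" using IH by (auto simp: unitary_mat_def)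
  have zz: "z = W1 * z' * adj W2" unfolding z'_def using conj_back[OF W1 W2 z] by simp
  have cW1: "W1 \<in> carrier_mat (1 + m) (1 + m)" and cW2: "adj W2 \<in> carrier_mat (1 + n') (1 + n')"
    using W1 W2 n by (auto simp: unitary_mat_def)
  have "z = (W1 * four_block_mat (1\<^sub>m 1) (0\<^sub>m 1 m) (0\<^sub>m m 1) UB) *
      four_block_mat (Dg 1 1 (\<lambda>_. sg)) (0\<^sub>m 1 n') (0\<^sub>m m 1) (Dg m n' s) *
      (four_block_mat (1\<^sub>m 1) (0\<^sub>m 1 n') (0\<^sub>m n' 1) VB * adj W2)"
    by (rule assemble[OF cW1 cW2 _ _ _ cUB _ cVB], insert zz split ul IH(4), auto)
  also have "four_block_mat (Dg 1 1 (\<lambda>_. sg)) (0\<^sub>m 1 n') (0\<^sub>m m 1) (Dg m n' s) = Dg (1 + m) (1 + n') (sh sg s)"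
    by (rule Dg_split[symmetric])
  finally have zf: "z = (W1 * four_block_mat (1\<^sub>m 1) (0\<^sub>m 1 m) (0\<^sub>m m 1) UB) * Dg (Suc m) n (sh sg s) *
      (four_block_mat (1\<^sub>m 1) (0\<^sub>m 1 n') (0\<^sub>m n' 1) VB * adj W2)" using n by simp
  have U: "unitary_mat (Suc m) (W1 * four_block_mat (1\<^sub>m 1) (0\<^sub>m 1 m) (0\<^sub>m m 1) UB)"
    using unitary_mult[OF W1] unitary_four_block[of 1 "1\<^sub>m 1" m UB] IH(1)
    by (auto simp: unitary_mat_def)
  have V: "unitary_mat n (four_block_mat (1\<^sub>m 1) (0\<^sub>m 1 n') (0\<^sub>m n' 1) VB * adj W2)"
    using unitary_mult[OF _ unitary_adj[OF W2]] unitary_four_block[of 1 "1\<^sub>m 1" n' VB] IH(2) n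
    by (auto simp: unitary_mat_def)
  have "\<forall>i. sh sg s i \<ge> 0" using IH(3) uv(5) by (auto simp: sh_def)
  then show ?case using U V zf by blast
qed

lemma map_cnj_mat_of_cols: "set us \<subseteq> carrier_vec n \<Longrightarrow> map_mat cnj (mat_of_cols n us) = mat_of_cols n (map conjugate us)"
proof (rule eq_matI)
  fix i j assume "set us \<subseteq> carrier_vec n" "i < dim_row (mat_of_cols n (map conjugate us))" "j < dim_col (mat_of_cols n (map conjugate us))"
  then show "map_mat cnj (mat_of_cols n us) $$ (i, j) = mat_of_cols n (map conjugate us) $$ (i, j)"
  proof -
    have "us ! j \<in> carrier_vec n" using nth_mem[of j us] \<open>set us \<subseteq> carrier_vec n\<close> \<open>j < dim_col _\<close> by auto
    then show ?thesis using \<open>i < dim_row _\<close> \<open>j < dim_col _\<close> by (auto simp: mat_of_cols_def)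
  qed
qed auto

lemma orthonormal_conj: assumes "orthonormal n us" shows "orthonormal n (map conjugate us)"
proof -
  have c: "set us \<subseteq> carrier_vec n" using assms by (auto simp: orthonormal_def)
  have inj: "inj_on conjugate (set us)" by (auto intro: inj_onI)
  have "\<forall>a\<in>set us. \<forall>b\<in>set us. conjugate a \<bullet>c conjugate b = (if conjugate a = conjugate b then 1 else 0)"
  proof (intro ballI)
    fix a b assume ab: "a \<in> set us" "b \<in> set us"
    then have "dim_vec b = dim_vec a" using c by (metis carrier_vecD subsetD)
    then have "conjugate a \<bullet>c conjugate b = b \<bullet>c a" by (subst cs_conj, auto)
    also have "\<dots> = (if conjugate a = conjugate b then 1 else 0)" using assms ab unfolding orthonormal_def by auto
    finally show "conjugate a \<bullet>c conjugate b = (if conjugate a = conjugate b then 1 else 0)" .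
  qed
  then show ?thesis using assms c by (auto simp: orthonormal_def distinct_map inj)
qed

lemma transpose_conj3: fixes W z :: "complex mat"
  assumes W: "W \<in> carrier_mat n n" and z: "z \<in> carrier_mat n n"
  shows "transpose_mat (adj W * z * map_mat cnj W) = adj W * transpose_mat z * map_mat cnj W"
proof -
  have aW: "adj W \<in> carrier_mat n n" and cW: "map_mat cnj W \<in> carrier_mat n n" using W by auto
  have az: "adj W * z \<in> carrier_mat n n" using aW z by auto
  have "transpose_mat (adj W * z * map_mat cnj W) = transpose_mat (map_mat cnj W) * transpose_mat (adj W * z)"
    using transpose_mult[OF az cW] .
  also have "transpose_mat (adj W * z) = transpose_mat z * transpose_mat (adj W)"
    using transpose_mult[OF aW z] .
  also have "transpose_mat (adj W) = map_mat cnj W" by (simp add: transpose_adj)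
  also have "transpose_mat (map_mat cnj W) = adj W" by (rule eq_matI, auto)
  finally have e: "transpose_mat (adj W * z * map_mat cnj W) = adj W * (transpose_mat z * map_mat cnj W)" .
  have a: "adj W * transpose_mat z * map_mat cnj W = adj W * (transpose_mat z * map_mat cnj W)"
    by (rule assoc_mult_mat[OF aW _ cW], use z in auto)
  show ?thesis using e a by simp
qed

lemma assemble_T: fixes W :: "complex mat"
  assumes W: "W \<in> carrier_mat (k1 + k2) (k1 + k2)"
  and UA: "UA \<in> carrier_mat k1 k1" and DA: "DA \<in> carrier_mat k1 k1"
  and UB: "UB \<in> carrier_mat k2 k2" and DB: "DB \<in> carrier_mat k2 k2"
  and z: "z = W * four_block_mat (UA * DA * transpose_mat UA) (0\<^sub>m k1 k2) (0\<^sub>m k2 k1) (UB * DB * transpose_mat UB) * transpose_mat W"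
  shows "z = (W * four_block_mat UA (0\<^sub>m k1 k2) (0\<^sub>m k2 k1) UB) * four_block_mat DA (0\<^sub>m k1 k2) (0\<^sub>m k2 k1) DB
     * transpose_mat (W * four_block_mat UA (0\<^sub>m k1 k2) (0\<^sub>m k2 k1) UB)"
proof -
  have WT: "transpose_mat W \<in> carrier_mat (k1 + k2) (k1 + k2)" using W by auto
  have e: "z = (W * four_block_mat UA (0\<^sub>m k1 k2) (0\<^sub>m k2 k1) UB) * four_block_mat DA (0\<^sub>m k1 k2) (0\<^sub>m k2 k1) DB
     * (four_block_mat (transpose_mat UA) (0\<^sub>m k1 k2) (0\<^sub>m k2 k1) (transpose_mat UB) * transpose_mat W)"
    by (rule assemble[OF W WT UA DA _ UB DB], insert z UA UB, auto)
  have "transpose_mat (W * four_block_mat UA (0\<^sub>m k1 k2) (0\<^sub>m k2 k1) UB)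
     = transpose_mat (four_block_mat UA (0\<^sub>m k1 k2) (0\<^sub>m k2 k1) UB) * transpose_mat W"
    using W UA UB by (subst transpose_mult[of _ "k1+k2" "k1+k2"], auto)
  also have "transpose_mat (four_block_mat UA (0\<^sub>m k1 k2) (0\<^sub>m k2 k1) UB)
     = four_block_mat (transpose_mat UA) (0\<^sub>m k1 k2) (0\<^sub>m k2 k1) (transpose_mat UB)"
    using UA UB by (subst transpose_four_block_mat, auto)
  finally have t: "transpose_mat (W * four_block_mat UA (0\<^sub>m k1 k2) (0\<^sub>m k2 k1) UB) =
     four_block_mat (transpose_mat UA) (0\<^sub>m k1 k2) (0\<^sub>m k2 k1) (transpose_mat UB) * transpose_mat W" .
  show ?thesis by (subst t, rule e)
qed

lemma unitary_cnj: assumes "unitary_mat n W" shows "unitary_mat n (map_mat cnj W)"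
proof -
  have W: "W \<in> carrier_mat n n" using assms by (auto simp: unitary_mat_def)
  have "map_mat cnj W * adj (map_mat cnj W) = map_mat cnj W * map_mat cnj (adj W)"
    by (simp add: adj_map_cnj, rule arg_cong[of _ _ "\<lambda>x. map_mat cnj W * x"], rule eq_matI, auto)
  also have "\<dots> = map_mat cnj (W * adj W)" using W by (simp add: map_cnj_mult[of _ n n _ n])
  also have "\<dots> = 1\<^sub>m n" using assms unfolding unitary_mat_def by (simp, intro eq_matI, auto)
  finally show ?thesis using W by (auto simp: unitary_mat_def)
qed

lemma adj_cnj: "adj (map_mat cnj W) = transpose_mat W" by (rule adj_map_cnj)

lemma quad_skew: fixes M :: "complex mat"
  assumes M: "M \<in> carrier_mat n n" and sk: "transpose_mat M = - M" and x: "x \<in> carrier_vec n"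
  shows "x \<bullet> (M *\<^sub>v x) = 0"
proof -
  have Mji: "M $$ (j,i) = - M $$ (i,j)" if "i < n" "j < n" for i j
    using arg_cong[OF sk, of "\<lambda>A. A $$ (i,j)"] that M by auto
  define S where "S = (\<Sum>i<n. \<Sum>j<n. x $ i * M $$ (i,j) * x $ j)"
  have xs: "x \<bullet> (M *\<^sub>v x) = S" using M x
    by (simp add: S_def scalar_prod_def row_def lessThan_atLeast0 sum_distrib_left algebra_simps)
  have "S = (\<Sum>j<n. \<Sum>i<n. x $ i * M $$ (i,j) * x $ j)" unfolding S_def by (rule sum.swap)
  also have "\<dots> = (\<Sum>j<n. \<Sum>i<n. - (x $ j * M $$ (j,i) * x $ i))"
  proof (intro sum.cong refl)
    fix j i assume "j \<in> {..<n}" "i \<in> {..<n}"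
    then have e: "M $$ (i,j) = - M $$ (j,i)" using Mji[of j i] by auto
    show "x $ i * M $$ (i,j) * x $ j = - (x $ j * M $$ (j,i) * x $ i)" unfolding e by simp
  qed
  also have "\<dots> = - S" unfolding S_def by (simp add: sum_negf)
  finally have "S = - S" .
  then have "S + S = 0" by (simp add: eq_neg_iff_add_eq_0)
  then have "S = 0" by simp
  then show ?thesis using xs by simp
qed

lemma normalize_vec_real: fixes x :: "complex vec" assumes x: "x \<in> carrier_vec n" "x \<noteq> 0\<^sub>v n"
  shows "\<exists>c::real. c > 0 \<and> (complex_of_real c \<cdot>\<^sub>v x) \<bullet>c (complex_of_real c \<cdot>\<^sub>v x) = 1"
proof -
  have pos: "nrm2 x > 0" using nrm2_zero[OF x(1)] x(2) nrm2_nonneg[of x] by linarith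
  define c where "c = 1 / sqrt (nrm2 x)"
  have "(complex_of_real c \<cdot>\<^sub>v x) \<bullet>c (complex_of_real c \<cdot>\<^sub>v x) = complex_of_real c * cnj (complex_of_real c) * (x \<bullet>c x)"
    using x by (simp add: cscalar_expand sum_distrib_left algebra_simps)
  also have "\<dots> = 1" using pos unfolding c_def cscalar_self
    by (simp flip: of_real_mult)
  finally show ?thesis using pos by (intro exI[of _ c], auto simp: c_def)
qed

lemma T_add: fixes z :: "complex mat" assumes z: "z \<in> carrier_mat n n" and x: "x \<in> carrier_vec n" and y: "y \<in> carrier_vec n"
  shows "z *\<^sub>v conjugate (x + y) = z *\<^sub>v conjugate x + z *\<^sub>v conjugate y"
  using x y z by (simp add: conjugate_add_vec[of x n y] mult_add_distrib_mat_vec[of z n n])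

lemma T_smult: fixes z :: "complex mat" assumes z: "z \<in> carrier_mat n n" and x: "x \<in> carrier_vec n"
  shows "z *\<^sub>v conjugate (c \<cdot>\<^sub>v x) = cnj c \<cdot>\<^sub>v (z *\<^sub>v conjugate x)"
  using x z by (simp add: conjugate_smult_vec mult_mat_vec[of z n n])

lemma T_conj_adj: fixes z :: "complex mat" assumes z: "z \<in> carrier_mat n n" and x: "x \<in> carrier_vec n"
  shows "z *\<^sub>v conjugate x = conjugate (map_mat cnj z *\<^sub>v x)"
  using z x by (intro eq_vecI, auto simp: scalar_prod_def row_def cnj_sum)

lemma adj_sym: fixes z :: "complex mat" assumes "transpose_mat z = z" shows "adj z = map_mat cnj z"
proof -
  have "adj z = map_mat cnj (transpose_mat z)" by (rule eq_matI, auto)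
  then show ?thesis using assms by simp
qed

lemma takagi_vec: fixes z :: "complex mat"
  assumes z: "z \<in> carrier_mat n n" and sym: "transpose_mat z = z" and n: "n > 0"
  shows "\<exists>w sg. w \<in> carrier_vec n \<and> w \<bullet>c w = 1 \<and> sg \<ge> 0 \<and> z *\<^sub>v conjugate w = complex_of_real sg \<cdot>\<^sub>v w"
proof -
  have H: "z * adj z \<in> carrier_mat n n" using z by auto
  obtain lam u where u: "u \<in> carrier_vec n" "u \<bullet>c u = 1" "(z * adj z) *\<^sub>v u = lam \<cdot>\<^sub>v u"
    using unit_eigenvector[OF H n] by auto
  have u0: "u \<noteq> 0\<^sub>v n" using u(2) by auto
  define y where "y = adj z *\<^sub>v u"
  have y: "y \<in> carrier_vec n" using z u unfolding y_def by (simp add: adj_mult_vec_carrier)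
  have lam: "lam = complex_of_real (nrm2 y)" unfolding y_def by (rule eig_nrm2[OF z u])
  have Tu: "z *\<^sub>v conjugate u = conjugate y"
    unfolding y_def using T_conj_adj[OF z u(1)] adj_sym[OF sym] by simp
  show ?thesis
  proof (cases "y = 0\<^sub>v n")
    case True
    then show ?thesis using u Tu by (intro exI[of _ u] exI[of _ 0], auto)
  next
    case False
    have pos: "nrm2 y > 0" using nrm2_zero[OF y] False nrm2_nonneg[of y] by linarith
    define sg where "sg = sqrt (nrm2 y)"
    have sg: "sg > 0" "sg * sg = nrm2 y" using pos unfolding sg_def by auto
    have lam2: "lam = complex_of_real sg * complex_of_real sg" using lam sg(2) by (metis of_real_mult)
    have Ty: "z *\<^sub>v conjugate (conjugate y) = lam \<cdot>\<^sub>v u"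
      using u(3) z u unfolding y_def by (simp add: assoc_mult_mat_vec[of z n n "adj z" n u])
    have cy: "conjugate y \<in> carrier_vec n" using y by auto
    have "\<exists>w0. w0 \<in> carrier_vec n \<and> w0 \<noteq> 0\<^sub>v n \<and> z *\<^sub>v conjugate w0 = complex_of_real sg \<cdot>\<^sub>v w0"
    proof (cases "complex_of_real sg \<cdot>\<^sub>v u + conjugate y = 0\<^sub>v n")
      case False
      let ?w = "complex_of_real sg \<cdot>\<^sub>v u + conjugate y"
      have "z *\<^sub>v conjugate ?w = z *\<^sub>v conjugate (complex_of_real sg \<cdot>\<^sub>v u) + z *\<^sub>v conjugate (conjugate y)"
        by (rule T_add[OF z], insert u cy, auto)
      also have "z *\<^sub>v conjugate (complex_of_real sg \<cdot>\<^sub>v u) = complex_of_real sg \<cdot>\<^sub>v conjugate y"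
        using T_smult[OF z u(1)] Tu by simp
      also have "complex_of_real sg \<cdot>\<^sub>v conjugate y + z *\<^sub>v conjugate (conjugate y) = complex_of_real sg \<cdot>\<^sub>v ?w"
        unfolding Ty lam2 using u cy y
        by (intro eq_vecI, auto simp: algebra_simps)
      finally show ?thesis using False u cy by (intro exI[of _ ?w], auto)
    next
      case True
      have cyu: "conjugate y = - (complex_of_real sg \<cdot>\<^sub>v u)"
      proof (rule eq_vecI)
        fix i assume "i < dim_vec (- (complex_of_real sg \<cdot>\<^sub>v u))"
        then have i: "i < n" using u by auto
        have "(complex_of_real sg \<cdot>\<^sub>v u + conjugate y) $ i = 0" using True i by simp
        moreover have "dim_vec (conjugate y) = n" "dim_vec u = n" using u y by auto
        ultimately have "complex_of_real sg * u $ i + conjugate y $ i = 0" using i by simp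
        then show "conjugate y $ i = (- (complex_of_real sg \<cdot>\<^sub>v u)) $ i" using i u
          by (simp add: add_eq_0_iff)
      qed (use u cy y in auto)
      let ?w = "\<i> \<cdot>\<^sub>v u"
      have "z *\<^sub>v conjugate ?w = cnj \<i> \<cdot>\<^sub>v conjugate y" using T_smult[OF z u(1)] Tu by simp
      also have "\<dots> = complex_of_real sg \<cdot>\<^sub>v ?w" unfolding cyu using u
        by (intro eq_vecI, auto)
      moreover have "?w \<noteq> 0\<^sub>v n"
      proof
        assume h: "?w = 0\<^sub>v n"
        have "(- \<i>) \<cdot>\<^sub>v ?w = u" by (simp add: smult_smult_assoc)
        then have "u = 0\<^sub>v n" unfolding h by (simp add: smult_zero_vec')
        then show False using u0 by simp
      qed
      ultimately show ?thesis using u by (intro exI[of _ ?w], auto)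
    qed
    then obtain w0 where w0: "w0 \<in> carrier_vec n" "w0 \<noteq> 0\<^sub>v n" "z *\<^sub>v conjugate w0 = complex_of_real sg \<cdot>\<^sub>v w0" by auto
    obtain c where c: "c > 0" "(complex_of_real c \<cdot>\<^sub>v w0) \<bullet>c (complex_of_real c \<cdot>\<^sub>v w0) = 1"
      using normalize_vec_real[OF w0(1,2)] by auto
    have "z *\<^sub>v conjugate (complex_of_real c \<cdot>\<^sub>v w0) = complex_of_real c \<cdot>\<^sub>v (complex_of_real sg \<cdot>\<^sub>v w0)"
      using T_smult[OF z w0(1)] w0(3) by simp
    also have "\<dots> = complex_of_real sg \<cdot>\<^sub>v (complex_of_real c \<cdot>\<^sub>v w0)" by (simp add: smult_smult_assoc mult.commute)
    finally show ?thesis using c w0 sg by (intro exI[of _ "complex_of_real c \<cdot>\<^sub>v w0"] exI[of _ sg], auto)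
  qed
qed

lemma tframe: fixes z :: "complex mat"
  assumes o: "orthonormal n us" and l: "length us = n" and z: "z \<in> carrier_mat n n"
  defines "W \<equiv> mat_of_cols n us"
  shows "unitary_mat n W"
    "adj W * z * map_mat cnj W \<in> carrier_mat n n"
    "\<And>i j. i < n \<Longrightarrow> j < n \<Longrightarrow> (adj W * z * map_mat cnj W) $$ (i,j) = (z *\<^sub>v conjugate (us ! j)) \<bullet>c us ! i"
    "z = W * (adj W * z * map_mat cnj W) * transpose_mat W"
    "transpose_mat (adj W * z * map_mat cnj W) = adj W * transpose_mat z * map_mat cnj W"
proof -
  have c: "set us \<subseteq> carrier_vec n" using o by (auto simp: orthonormal_def)
  show W: "unitary_mat n W" unfolding W_def by (rule orthonormal_unitary[OF o l])
  have cW: "W \<in> carrier_mat n n" using W by (auto simp: unitary_mat_def)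
  show "adj W * z * map_mat cnj W \<in> carrier_mat n n" using cW z by auto
  have mc: "map_mat cnj W = mat_of_cols n (map conjugate us)" unfolding W_def by (rule map_cnj_mat_of_cols[OF c])
  have c2: "set (map conjugate us) \<subseteq> carrier_vec n" using c by auto
  show "(adj W * z * map_mat cnj W) $$ (i,j) = (z *\<^sub>v conjugate (us ! j)) \<bullet>c us ! i" if "i < n" "j < n" for i j
    unfolding mc using entry_formula[OF z c c2, of i j] that l unfolding W_def by auto
  have "W * (adj W * z * map_mat cnj W) * adj (map_mat cnj W) = z"
    by (rule conj_back[OF W unitary_cnj[OF W] z])
  then show "z = W * (adj W * z * map_mat cnj W) * transpose_mat W" by (simp add: adj_map_cnj)
  show "transpose_mat (adj W * z * map_mat cnj W) = adj W * transpose_mat z * map_mat cnj W"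
    by (rule transpose_conj3[OF cW z])
qed

lemma takagi: fixes z :: "complex mat"
  assumes "z \<in> carrier_mat n n" "transpose_mat z = z"
  shows "\<exists>U s. unitary_mat n U \<and> (\<forall>i. s i \<ge> 0) \<and> z = U * Dg n n s * transpose_mat U"
  using assms
proof (induct n arbitrary: z)
  case 0
  have "z = 1\<^sub>m 0 * Dg 0 0 (\<lambda>_. 0) * transpose_mat (1\<^sub>m 0)"
    by (rule eq_matI, insert 0, auto)
  moreover have "unitary_mat 0 (1\<^sub>m 0)" by (auto simp: unitary_mat_def)
  ultimately show ?case by (intro exI[of _ "1\<^sub>m 0"] exI[of _ "\<lambda>_. 0::real"], auto)
next
  case (Suc n)
  have z: "z \<in> carrier_mat (Suc n) (Suc n)" and sym: "transpose_mat z = z" using Suc by auto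
  obtain w sg where w: "w \<in> carrier_vec (Suc n)" "w \<bullet>c w = 1" "sg \<ge> 0"
    "z *\<^sub>v conjugate w = complex_of_real sg \<cdot>\<^sub>v w"
    using takagi_vec[OF z sym] by auto
  have ow: "orthonormal (Suc n) [w]" using w by (auto simp: orthonormal_def)
  obtain ws where ws: "orthonormal (Suc n) ([w] @ ws)" "length ([w] @ ws) = Suc n"
    using orthonormal_complete[OF ow] by auto
  define us where "us = [w] @ ws"
  define W where "W = mat_of_cols (Suc n) us"
  note fr = tframe[OF ws[folded us_def] z, folded W_def]
  define z' where "z' = adj W * z * map_mat cnj W"
  have us: "set us \<subseteq> carrier_vec (Suc n)" "length us = Suc n" "us ! 0 = w"
    using ws unfolding us_def orthonormal_def by auto
  have z': "z' \<in> carrier_mat (1 + n) (1 + n)" using fr(2) unfolding z'_def by simp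
  have z'sym: "transpose_mat z' = z'" unfolding z'_def fr(5) sym ..
  have col0: "z' $$ (i,0) = (if i = 0 then complex_of_real sg else 0)" if i: "i < Suc n" for i
  proof -
    have ui: "us ! i \<in> carrier_vec (Suc n)" using us i by auto
    have "z' $$ (i,0) = (complex_of_real sg \<cdot>\<^sub>v w) \<bullet>c us ! i" using fr(3)[OF i, of 0] us w unfolding z'_def by auto
    also have "\<dots> = complex_of_real sg * (w \<bullet>c us ! i)" using w ui by (subst cs_smult_left, auto)
    also have "w \<bullet>c us ! i = (if i = 0 then 1 else 0)"
      using orthonormal_nth[OF ws(1)[folded us_def], of 0 i] us i by auto
    finally show ?thesis by simp
  qed
  have symz': "z' $$ (i,j) = z' $$ (j,i)" if "i < Suc n" "j < Suc n" for i j
    using arg_cong[OF z'sym, of "\<lambda>A. A $$ (j,i)"] that z' by auto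
  have split: "z' = four_block_mat (ul_blk 1 1 z') (0\<^sub>m 1 n) (0\<^sub>m n 1) (lr_blk 1 1 z')"
    by (rule block_split[OF z'], insert col0 symz', auto)
  have ul: "ul_blk 1 1 z' = 1\<^sub>m 1 * Dg 1 1 (\<lambda>_. sg) * transpose_mat (1\<^sub>m 1)"
    by (rule eq_matI, auto simp: ul_blk_def Dg_def col0)
  have B: "lr_blk 1 1 z' \<in> carrier_mat n n" using lr_blk_carrier[OF z'] .
  have Bsym: "transpose_mat (lr_blk 1 1 z') = lr_blk 1 1 z'"
  proof (rule eq_matI)
    fix i j assume "i < dim_row (lr_blk 1 1 z')" "j < dim_col (lr_blk 1 1 z')"
    then have ij: "i < n" "j < n" using B by auto
    have "lr_blk 1 1 z' $$ (j, i) = z' $$ (j + 1, i + 1)" "lr_blk 1 1 z' $$ (i, j) = z' $$ (i + 1, j + 1)"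
      using ij z' by (auto simp: lr_blk_def)
    then show "transpose_mat (lr_blk 1 1 z') $$ (i, j) = lr_blk 1 1 z' $$ (i, j)"
      using ij B symz'[of "i+1" "j+1"] by auto
  qed (use B in auto)
  obtain UB s where IH: "unitary_mat n UB" "\<forall>i. s i \<ge> 0"
    "lr_blk 1 1 z' = UB * Dg n n s * transpose_mat UB"
    using Suc(1)[OF B Bsym] by auto
  have cUB: "UB \<in> carrier_mat n n" using IH by (auto simp: unitary_mat_def)
  have cW: "W \<in> carrier_mat (1 + n) (1 + n)" using fr(1) by (auto simp: unitary_mat_def)
  have "z = (W * four_block_mat (1\<^sub>m 1) (0\<^sub>m 1 n) (0\<^sub>m n 1) UB) *
      four_block_mat (Dg 1 1 (\<lambda>_. sg)) (0\<^sub>m 1 n) (0\<^sub>m n 1) (Dg n n s) *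
      transpose_mat (W * four_block_mat (1\<^sub>m 1) (0\<^sub>m 1 n) (0\<^sub>m n 1) UB)"
    by (rule assemble_T[OF cW _ _ cUB], insert fr(4) split ul IH(3), auto simp: z'_def)
  also have "four_block_mat (Dg 1 1 (\<lambda>_. sg)) (0\<^sub>m 1 n) (0\<^sub>m n 1) (Dg n n s) = Dg (1 + n) (1 + n) (sh sg s)"
    by (rule Dg_split[symmetric])
  finally have zf: "z = (W * four_block_mat (1\<^sub>m 1) (0\<^sub>m 1 n) (0\<^sub>m n 1) UB) * Dg (Suc n) (Suc n) (sh sg s) *
      transpose_mat (W * four_block_mat (1\<^sub>m 1) (0\<^sub>m 1 n) (0\<^sub>m n 1) UB)" by simp
  have U: "unitary_mat (Suc n) (W * four_block_mat (1\<^sub>m 1) (0\<^sub>m 1 n) (0\<^sub>m n 1) UB)"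
    using unitary_mult[OF fr(1)] unitary_four_block[of 1 "1\<^sub>m 1" n UB] IH(1)
    by (auto simp: unitary_mat_def)
  have "\<forall>i. sh sg s i \<ge> 0" using IH(2) w(3) by (auto simp: sh_def)
  then show ?case using U zf by blast
qed

definition pt :: "nat \<Rightarrow> nat" where "pt i = (if even i then Suc i else i - 1)"

definition Ym :: "nat \<Rightarrow> nat \<Rightarrow> (nat \<Rightarrow> real) \<Rightarrow> complex mat" where
  "Ym n k s = mat n n (\<lambda>(i,j). if i < 2 * k \<and> j = pt i then
      (if even i then complex_of_real (s (i div 2)) else - complex_of_real (s (i div 2))) else 0)"

lemma Ym_carrier[simp]: "Ym n k s \<in> carrier_mat n n" by (simp add: Ym_def)
lemma Ym_dim[simp]: "dim_row (Ym n k s) = n" "dim_col (Ym n k s) = n" by (simp_all add: Ym_def)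

lemma Ym_split1: "Ym (2 + n) (Suc k) (sh a s) = four_block_mat (Ym 2 1 (\<lambda>_. a)) (0\<^sub>m 2 n) (0\<^sub>m n 2) (Ym n k s)"
proof (rule eq_matI)
  fix i j assume ij: "i < dim_row (four_block_mat (Ym 2 1 (\<lambda>_. a)) (0\<^sub>m 2 n) (0\<^sub>m n 2) (Ym n k s))"
    "j < dim_col (four_block_mat (Ym 2 1 (\<lambda>_. a)) (0\<^sub>m 2 n) (0\<^sub>m n 2) (Ym n k s))"
  then have i: "i < 2 + n" and j: "j < 2 + n" by auto
  show "Ym (2 + n) (Suc k) (sh a s) $$ (i, j) = four_block_mat (Ym 2 1 (\<lambda>_. a)) (0\<^sub>m 2 n) (0\<^sub>m n 2) (Ym n k s) $$ (i, j)"
  proof (cases "i < 2")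
    case True
    then show ?thesis using i j by (auto simp: Ym_def pt_def sh_def)
  next
    case False
    then obtain i' where i': "i = i' + 2" by (metis add.commute le_Suc_ex not_less)
    have ev: "even i = even i'" "i div 2 = Suc (i' div 2)" using i' by auto
    have pti: "pt i = pt i' + 2" unfolding pt_def using i' by auto
    show ?thesis
    proof (cases "j < 2")
      case True
      have "pt i \<ge> 2" using pti by simp
      then show ?thesis using i j False True by (auto simp: Ym_def)
    next
      case False
      then obtain j' where j': "j = j' + 2" by (metis add.commute le_Suc_ex not_less)
      show ?thesis using i j i' j' ev pti by (auto simp: Ym_def sh_def)
    qed
  qed
qed auto

lemma Ym_split2: assumes "2 * k \<le> n"
  shows "Ym (n + 1) k s = four_block_mat (Ym n k s) (0\<^sub>m n 1) (0\<^sub>m 1 n) (0\<^sub>m 1 1)"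
proof (rule eq_matI)
  fix i j assume ij: "i < dim_row (four_block_mat (Ym n k s) (0\<^sub>m n 1) (0\<^sub>m 1 n) (0\<^sub>m 1 1))"
    "j < dim_col (four_block_mat (Ym n k s) (0\<^sub>m n 1) (0\<^sub>m 1 n) (0\<^sub>m 1 1))"
  then have i: "i < n + 1" and j: "j < n + 1" by auto
  have "pt i < 2 * k" if "i < 2 * k" using that unfolding pt_def by presburger
  then show "Ym (n + 1) k s $$ (i, j) = four_block_mat (Ym n k s) (0\<^sub>m n 1) (0\<^sub>m 1 n) (0\<^sub>m 1 1) $$ (i, j)"
    using i j assms by (auto simp: Ym_def)
qed auto

lemma cartan_e_II: "cartan_e (TypeII n) = Ym n (n div 2) (\<lambda>_. 1)"
proof (rule eq_matI)
  fix i j assume "i < dim_row (Ym n (n div 2) (\<lambda>_. 1))" "j < dim_col (Ym n (n div 2) (\<lambda>_. 1))"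
  then have i: "i < n" and j: "j < n" by (auto simp: Ym_def)
  have a: "(even i \<and> j = i + 1) \<longleftrightarrow> (i < 2 * (n div 2) \<and> j = pt i \<and> even i)" using i j unfolding pt_def by presburger
  have b: "(even j \<and> i = j + 1) \<longleftrightarrow> (i < 2 * (n div 2) \<and> j = pt i \<and> odd i)" using i j unfolding pt_def by presburger
  show "cartan_e (TypeII n) $$ (i, j) = Ym n (n div 2) (\<lambda>_. 1) $$ (i, j)"
    using i j a b by (auto simp: Ym_def)
qed (auto simp: Ym_def)

lemma skew_entry: fixes M :: "complex mat"
  assumes "M \<in> carrier_mat n n" "transpose_mat M = - M" "i < n" "j < n"
  shows "M $$ (i,j) = - M $$ (j,i)"
proof -
  have d: "dim_row M = n" "dim_col M = n" using assms(1) by auto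
  show ?thesis using arg_cong[OF assms(2), of "\<lambda>A. A $$ (j,i)"] assms(3,4) d by simp
qed

lemma ul_blk_skew: fixes M :: "complex mat"
  assumes M: "M \<in> carrier_mat (k1 + k2) (k1 + k2)" and sk: "transpose_mat M = - M"
  shows "transpose_mat (ul_blk k1 k1 M) = - ul_blk k1 k1 M"
proof (rule eq_matI)
  fix i j assume "i < dim_row (- ul_blk k1 k1 M)" "j < dim_col (- ul_blk k1 k1 M)"
  then have ij: "i < k1" "j < k1" by (auto simp: ul_blk_def)
  show "transpose_mat (ul_blk k1 k1 M) $$ (i, j) = (- ul_blk k1 k1 M) $$ (i, j)"
    using ij M skew_entry[OF M sk, of i j] by (auto simp: ul_blk_def)
qed (auto simp: ul_blk_def)

lemma lr_blk_skew: fixes M :: "complex mat"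
  assumes M: "M \<in> carrier_mat (k1 + k2) (k1 + k2)" and sk: "transpose_mat M = - M"
  shows "transpose_mat (lr_blk k1 k1 M) = - lr_blk k1 k1 M"
proof (rule eq_matI)
  fix i j assume "i < dim_row (- lr_blk k1 k1 M)" "j < dim_col (- lr_blk k1 k1 M)"
  then have ij: "i < k2" "j < k2" using M by (auto simp: lr_blk_def)
  show "transpose_mat (lr_blk k1 k1 M) $$ (i, j) = (- lr_blk k1 k1 M) $$ (i, j)"
    using ij M skew_entry[OF M sk, of "i + k1" "j + k1"] by (auto simp: lr_blk_def)
qed (use M in \<open>auto simp: lr_blk_def\<close>)

lemma conj_dot: fixes u y :: "complex vec" shows "dim_vec u = dim_vec y \<Longrightarrow> conjugate y \<bullet>c u = cnj (u \<bullet> y)"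
  by (simp add: scalar_prod_def cnj_sum mult.commute)

lemma youla: fixes z :: "complex mat"
  assumes "z \<in> carrier_mat n n" "transpose_mat z = - z"
  shows "\<exists>U k s. unitary_mat n U \<and> 2 * k \<le> n \<and> (\<forall>j. s j > 0) \<and> z = U * Ym n k s * transpose_mat U"
  using assms
proof (induct n arbitrary: z rule: less_induct)
  case (less n)
  have z: "z \<in> carrier_mat n n" and sk: "transpose_mat z = - z" using less by auto
  show ?case
  proof (cases "n = 0")
    case True
    have "z = 1\<^sub>m 0 * Ym 0 0 (\<lambda>_. 1) * transpose_mat (1\<^sub>m 0)"
      by (rule eq_matI, insert z True, auto)
    moreover have "unitary_mat 0 (1\<^sub>m 0)" by (auto simp: unitary_mat_def)
    ultimately show ?thesis using True
      by (intro exI[of _ "1\<^sub>m 0"] exI[of _ "0::nat"] exI[of _ "\<lambda>_. 1::real"], auto)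
  next
    case False
    then have n: "n > 0" by auto
    have adjz: "adj z = - map_mat cnj z"
    proof (rule eq_matI)
      fix i j assume "i < dim_row (- map_mat cnj z)" "j < dim_col (- map_mat cnj z)"
      then have ij: "i < n" "j < n" using z by auto
      then show "adj z $$ (i, j) = (- map_mat cnj z) $$ (i, j)" using skew_entry[OF z sk, of j i] z by auto
    qed (use z in auto)
    have Tc: "z *\<^sub>v conjugate x = - conjugate (adj z *\<^sub>v x)" if x: "x \<in> carrier_vec n" for x
    proof -
      have "z *\<^sub>v conjugate x = conjugate (map_mat cnj z *\<^sub>v x)" by (rule T_conj_adj[OF z x])
      also have "map_mat cnj z = - adj z" using adjz by simp
      also have "(- adj z) *\<^sub>v x = - (adj z *\<^sub>v x)" using x z by (subst uminus_mult_mat_vec, auto)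
      also have "conjugate (- (adj z *\<^sub>v x)) = - conjugate (adj z *\<^sub>v x)" by (rule uminus_conjugate_vec[symmetric])
      finally show ?thesis .
    qed
    have H: "z * adj z \<in> carrier_mat n n" using z by auto
    obtain lam u where u: "u \<in> carrier_vec n" "u \<bullet>c u = 1" "(z * adj z) *\<^sub>v u = lam \<cdot>\<^sub>v u"
      using unit_eigenvector[OF H n] by auto
    define y where "y = adj z *\<^sub>v u"
    have y: "y \<in> carrier_vec n" using z u unfolding y_def by (simp add: adj_mult_vec_carrier)
    have lam: "lam = complex_of_real (nrm2 y)" unfolding y_def by (rule eig_nrm2[OF z u])
    have Tu: "z *\<^sub>v conjugate u = - conjugate y" unfolding y_def by (rule Tc[OF u(1)])
    show ?thesis
    proof (cases "y = 0\<^sub>v n")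
      case True
      have Tu0: "z *\<^sub>v conjugate u = 0\<^sub>v n" using Tu True by simp
      obtain m where m: "n = m + 1" using n by (metis Suc_eq_plus1 gr0_implies_Suc)
      have ou: "orthonormal n [u]" using u by (auto simp: orthonormal_def)
      obtain ws where ws: "orthonormal n ([u] @ ws)" "length ([u] @ ws) = n"
        using orthonormal_complete[OF ou] n by auto
      define us where "us = ws @ [u]"
      have ous: "orthonormal n us" unfolding us_def
        by (rule orthonormal_perm[OF _ _ ws(1)], insert ws(1), auto simp: orthonormal_def)
      have lus: "length us = n" using ws unfolding us_def by simp
      have usm: "us ! m = u" using lus m unfolding us_def by (simp add: nth_append)
      have usc: "set us \<subseteq> carrier_vec n" using ous by (auto simp: orthonormal_def)
      define W where "W = mat_of_cols n us"
      note fr = tframe[OF ous lus z, folded W_def]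
      define z' where "z' = adj W * z * map_mat cnj W"
      have z'c: "z' \<in> carrier_mat n n" using fr(2) unfolding z'_def .
      have cW0: "W \<in> carrier_mat n n" using fr(1) by (auto simp: unitary_mat_def)
      have z'sk: "transpose_mat z' = - z'" unfolding z'_def fr(5) sk
        using cW0 z by (simp add: uminus_mult_left_mat uminus_mult_right_mat)
      have colm: "z' $$ (i, m) = 0" if i: "i < n" for i
      proof -
        have ui: "us ! i \<in> carrier_vec n" using usc lus i by auto
        have "z' $$ (i, m) = (0\<^sub>v n) \<bullet>c us ! i" using fr(3)[OF i, of m] m usm Tu0 unfolding z'_def by simp
        also have "\<dots> = 0" using ui by (simp add: cscalar_expand)
        finally show ?thesis .
      qed
      have rowm: "z' $$ (m, j) = 0" if "j < n" for j
        using skew_entry[OF z'c z'sk, of m j] colm[OF that] m that by simp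
      have z'c2: "z' \<in> carrier_mat (m + 1) (m + 1)" using z'c m by simp
      have split: "z' = four_block_mat (ul_blk m m z') (0\<^sub>m m 1) (0\<^sub>m 1 m) (lr_blk m m z')"
      proof (rule block_split[OF z'c2])
        fix i j assume ij: "i < m + 1" "j < m + 1" "(i < m) \<noteq> (j < m)"
        then have "i = m \<or> j = m" by auto
        then show "z' $$ (i, j) = 0" using colm rowm ij m by auto
      qed
      have A: "ul_blk m m z' \<in> carrier_mat m m" by (rule ul_blk_carrier)
      have Ask: "transpose_mat (ul_blk m m z') = - ul_blk m m z'" by (rule ul_blk_skew[OF z'c2 z'sk])
      obtain UA k s where IH: "unitary_mat m UA" "2 * k \<le> m" "\<forall>j. s j > 0"
          "ul_blk m m z' = UA * Ym m k s * transpose_mat UA"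
        using less(1)[of m "ul_blk m m z'"] A Ask m by auto
      have B: "lr_blk m m z' = 1\<^sub>m 1 * 0\<^sub>m 1 1 * transpose_mat (1\<^sub>m 1)"
        by (rule eq_matI, insert z'c2 rowm m, auto simp: lr_blk_def)
      have cUA: "UA \<in> carrier_mat m m" using IH(1) by (auto simp: unitary_mat_def)
      have cW: "W \<in> carrier_mat (m + 1) (m + 1)" using fr(1) m by (auto simp: unitary_mat_def)
      have z_eq: "z = W * four_block_mat (UA * Ym m k s * transpose_mat UA) (0\<^sub>m m 1) (0\<^sub>m 1 m)
          (1\<^sub>m 1 * 0\<^sub>m 1 1 * transpose_mat (1\<^sub>m 1)) * transpose_mat W"
        using fr(4) split IH(4) B unfolding z'_def by metis
      have "z = (W * four_block_mat UA (0\<^sub>m m 1) (0\<^sub>m 1 m) (1\<^sub>m 1)) * four_block_mat (Ym m k s) (0\<^sub>m m 1) (0\<^sub>m 1 m) (0\<^sub>m 1 1)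
          * transpose_mat (W * four_block_mat UA (0\<^sub>m m 1) (0\<^sub>m 1 m) (1\<^sub>m 1))"
        by (rule assemble_T[OF cW cUA Ym_carrier one_carrier_mat zero_carrier_mat z_eq])
      also have "four_block_mat (Ym m k s) (0\<^sub>m m 1) (0\<^sub>m 1 m) (0\<^sub>m 1 1) = Ym (m + 1) k s"
        by (rule Ym_split2[OF IH(2), symmetric])
      finally have zf: "z = (W * four_block_mat UA (0\<^sub>m m 1) (0\<^sub>m 1 m) (1\<^sub>m 1)) * Ym n k s
          * transpose_mat (W * four_block_mat UA (0\<^sub>m m 1) (0\<^sub>m 1 m) (1\<^sub>m 1))" using m by simp
      have U: "unitary_mat n (W * four_block_mat UA (0\<^sub>m m 1) (0\<^sub>m 1 m) (1\<^sub>m 1))"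
        using unitary_mult[OF fr(1)] unitary_four_block[OF IH(1), of 1 "1\<^sub>m 1"] m
        by (auto simp: unitary_mat_def)
      show ?thesis using zf U IH(2,3) m by (intro exI[of _ "W * four_block_mat UA (0\<^sub>m m 1) (0\<^sub>m 1 m) (1\<^sub>m 1)"] exI[of _ k] exI[of _ s], auto)
    next
      case False
      have pos: "nrm2 y > 0" using nrm2_zero[OF y] False nrm2_nonneg[of y] by linarith
      define sg where "sg = sqrt (nrm2 y)"
      have sg: "sg > 0" "sg * sg = nrm2 y" using pos unfolding sg_def by auto
      have lam2: "lam = complex_of_real sg * complex_of_real sg" using lam sg(2) by (metis of_real_mult)
      have n2: "n \<ge> 2"
      proof (rule ccontr)
        assume "\<not> n \<ge> 2"
        then have n1: "n = 1" using n by auto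
        have "z = 0\<^sub>m n n"
        proof (rule eq_matI)
          fix i j assume "i < dim_row (0\<^sub>m n n :: complex mat)" "j < dim_col (0\<^sub>m n n :: complex mat)"
          then have ij: "i = 0" "j = 0" using n1 by auto
          show "z $$ (i, j) = 0\<^sub>m n n $$ (i, j)" using skew_entry[OF z sk, of 0 0] ij n1 by simp
        qed (use z in auto)
        then have az0: "adj z = 0\<^sub>m n n" by simp
        have "y = 0\<^sub>v n" unfolding y_def az0 using u(1) by (intro eq_vecI, auto simp: scalar_prod_def)
        then show False using False by simp
      qed
      define u1 where "u1 = complex_of_real (1 / sg) \<cdot>\<^sub>v conjugate y"
      have cy: "conjugate y \<in> carrier_vec n" using y by simp
      have u1c: "u1 \<in> carrier_vec n" unfolding u1_def using cy by simp
      have cyu1: "conjugate y = complex_of_real sg \<cdot>\<^sub>v u1"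
        unfolding u1_def smult_smult_assoc using sg by (simp flip: of_real_mult)
      have Tu': "z *\<^sub>v conjugate u = complex_of_real (- sg) \<cdot>\<^sub>v u1"
        unfolding Tu cyu1 by (intro eq_vecI, auto)
      have Tu1: "z *\<^sub>v conjugate u1 = complex_of_real sg \<cdot>\<^sub>v u"
      proof -
        have "z *\<^sub>v conjugate u1 = cnj (complex_of_real (1 / sg)) \<cdot>\<^sub>v (z *\<^sub>v conjugate (conjugate y))"
          unfolding u1_def by (rule T_smult[OF z cy])
        also have "z *\<^sub>v conjugate (conjugate y) = lam \<cdot>\<^sub>v u"
          using u(3) z u unfolding y_def by (simp add: assoc_mult_mat_vec[of z n n "adj z" n u])
        also have "cnj (complex_of_real (1 / sg)) \<cdot>\<^sub>v (lam \<cdot>\<^sub>v u) = complex_of_real sg \<cdot>\<^sub>v u"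
          unfolding smult_smult_assoc lam2 using sg by (simp add: field_simps)
        finally show ?thesis .
      qed
      have u1u1: "u1 \<bullet>c u1 = 1"
      proof -
        have "u1 \<bullet>c u1 = complex_of_real (1/sg) * cnj (complex_of_real (1/sg)) * (conjugate y \<bullet>c conjugate y)"
          unfolding u1_def using cy by (simp add: cs_smult_left cs_smult_right)
        also have "conjugate y \<bullet>c conjugate y = y \<bullet>c y" by (rule cs_conj, simp)
        also have "complex_of_real (1/sg) * cnj (complex_of_real (1/sg)) * (y \<bullet>c y) = 1"
          unfolding cscalar_self sg(2)[symmetric] using sg pos by (simp flip: of_real_mult add: field_simps)
        finally show ?thesis .
      qed
      have uy: "u \<bullet> y = 0"
      proof -
        have az: "adj z \<in> carrier_mat n n" using z by simp
        have "transpose_mat (adj z) = map_mat cnj z" by (rule transpose_adj)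
        also have "map_mat cnj z = - adj z" using adjz by simp
        finally have "transpose_mat (adj z) = - adj z" .
        then show ?thesis unfolding y_def by (rule quad_skew[OF az _ u(1)])
      qed
      have u1u: "u1 \<bullet>c u = 0"
      proof -
        have "u1 \<bullet>c u = complex_of_real (1/sg) * (conjugate y \<bullet>c u)"
          unfolding u1_def using cy u by (simp add: cs_smult_left)
        also have "conjugate y \<bullet>c u = cnj (u \<bullet> y)" by (rule conj_dot, insert u y, auto)
        finally show ?thesis using uy by simp
      qed
      have uu1: "u \<bullet>c u1 = 0" using cs_swap[of u1 u] u1u u u1c by auto
      have ne: "u \<noteq> u1" using u(2) u1u by auto
      have o2: "orthonormal n [u, u1]" using u u1c u1u1 u1u uu1 ne by (auto simp: orthonormal_def)
      obtain ws where ws: "orthonormal n ([u, u1] @ ws)" "length ([u, u1] @ ws) = n"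
        using orthonormal_complete[OF o2] n2 by auto
      define us where "us = [u, u1] @ ws"
      have ous: "orthonormal n us" and lus: "length us = n" using ws unfolding us_def by auto
      have us01: "us ! 0 = u" "us ! 1 = u1" unfolding us_def by auto
      have usc: "set us \<subseteq> carrier_vec n" using ous by (auto simp: orthonormal_def)
      define W where "W = mat_of_cols n us"
      note fr = tframe[OF ous lus z, folded W_def]
      define z' where "z' = adj W * z * map_mat cnj W"
      have z'c: "z' \<in> carrier_mat n n" using fr(2) unfolding z'_def .
      have cW0: "W \<in> carrier_mat n n" using fr(1) by (auto simp: unitary_mat_def)
      have z'sk: "transpose_mat z' = - z'" unfolding z'_def fr(5) sk
        using cW0 z by (simp add: uminus_mult_left_mat uminus_mult_right_mat)
      have col0: "z' $$ (i, 0) = (if i = 1 then complex_of_real (- sg) else 0)" if i: "i < n" for i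
      proof -
        have ui: "us ! i \<in> carrier_vec n" using usc lus i by auto
        have "z' $$ (i, 0) = (complex_of_real (- sg) \<cdot>\<^sub>v u1) \<bullet>c us ! i"
          using fr(3)[OF i, of 0] n us01 Tu' unfolding z'_def by simp
        also have "\<dots> = complex_of_real (- sg) * (u1 \<bullet>c us ! i)" using ui u1c by (subst cs_smult_left, auto)
        also have "u1 \<bullet>c us ! i = (if i = 1 then 1 else 0)"
          using orthonormal_nth[OF ous, of 1 i] us01 lus i n2 by auto
        finally show ?thesis by simp
      qed
      have col1: "z' $$ (i, 1) = (if i = 0 then complex_of_real sg else 0)" if i: "i < n" for i
      proof -
        have ui: "us ! i \<in> carrier_vec n" using usc lus i by auto
        have "z' $$ (i, 1) = (complex_of_real sg \<cdot>\<^sub>v u) \<bullet>c us ! i"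
          using fr(3)[OF i, of 1] n2 us01 Tu1 unfolding z'_def by simp
        also have "\<dots> = complex_of_real sg * (u \<bullet>c us ! i)" using ui u by (subst cs_smult_left, auto)
        also have "u \<bullet>c us ! i = (if i = 0 then 1 else 0)"
          using orthonormal_nth[OF ous, of 0 i] us01 lus i n by auto
        finally show ?thesis by simp
      qed
      obtain m where m: "n = 2 + m" using n2 by (metis le_Suc_ex)
      have z'c2: "z' \<in> carrier_mat (2 + m) (2 + m)" using z'c m by simp
      have lowcol: "z' $$ (i, j) = 0" if "i < n" "j < 2" "\<not> i < 2" for i j
      proof -
        have "j = 0 \<or> j = 1" using that by auto
        then show ?thesis using col0 col1 that by auto
      qed
      have split: "z' = four_block_mat (ul_blk 2 2 z') (0\<^sub>m 2 m) (0\<^sub>m m 2) (lr_blk 2 2 z')"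
      proof (rule block_split[OF z'c2])
        fix i j assume ij: "i < 2 + m" "j < 2 + m" "(i < 2) \<noteq> (j < 2)"
        show "z' $$ (i, j) = 0"
        proof (cases "i < 2")
          case True
          then have "\<not> j < 2" using ij by auto
          then show ?thesis using skew_entry[OF z'c z'sk, of i j] lowcol[of j i] ij True m by auto
        next
          case False
          then show ?thesis using lowcol[of i j] ij m by auto
        qed
      qed
      have A: "ul_blk 2 2 z' = 1\<^sub>m 2 * Ym 2 1 (\<lambda>_. sg) * transpose_mat (1\<^sub>m 2)"
      proof (rule eq_matI)
        fix i j assume "i < dim_row (1\<^sub>m 2 * Ym 2 1 (\<lambda>_. sg) * transpose_mat (1\<^sub>m 2 :: complex mat))"
          "j < dim_col (1\<^sub>m 2 * Ym 2 1 (\<lambda>_. sg) * transpose_mat (1\<^sub>m 2 :: complex mat))"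
        then have ij: "i < 2" "j < 2" by auto
        then have "j = 0 \<or> j = 1" "i = 0 \<or> i = 1" by auto
        then show "ul_blk 2 2 z' $$ (i, j) = (1\<^sub>m 2 * Ym 2 1 (\<lambda>_. sg) * transpose_mat (1\<^sub>m 2)) $$ (i, j)"
          using ij col0[of i] col1[of i] n2 by (auto simp: ul_blk_def Ym_def pt_def)
      qed (auto simp: ul_blk_def)
      have B: "lr_blk 2 2 z' \<in> carrier_mat m m" using lr_blk_carrier[OF z'c2] .
      have Bsk: "transpose_mat (lr_blk 2 2 z') = - lr_blk 2 2 z'" by (rule lr_blk_skew[OF z'c2 z'sk])
      obtain UB k s where IH: "unitary_mat m UB" "2 * k \<le> m" "\<forall>j. s j > 0"
          "lr_blk 2 2 z' = UB * Ym m k s * transpose_mat UB"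
        using less(1)[of m "lr_blk 2 2 z'"] B Bsk m by auto
      have cUB: "UB \<in> carrier_mat m m" using IH(1) by (auto simp: unitary_mat_def)
      have cW: "W \<in> carrier_mat (2 + m) (2 + m)" using fr(1) m by (auto simp: unitary_mat_def)
      have z_eq: "z = W * four_block_mat (1\<^sub>m 2 * Ym 2 1 (\<lambda>_. sg) * transpose_mat (1\<^sub>m 2)) (0\<^sub>m 2 m) (0\<^sub>m m 2)
          (UB * Ym m k s * transpose_mat UB) * transpose_mat W"
        using fr(4) split IH(4) A unfolding z'_def by metis
      have "z = (W * four_block_mat (1\<^sub>m 2) (0\<^sub>m 2 m) (0\<^sub>m m 2) UB) * four_block_mat (Ym 2 1 (\<lambda>_. sg)) (0\<^sub>m 2 m) (0\<^sub>m m 2) (Ym m k s)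
          * transpose_mat (W * four_block_mat (1\<^sub>m 2) (0\<^sub>m 2 m) (0\<^sub>m m 2) UB)"
        by (rule assemble_T[OF cW one_carrier_mat Ym_carrier cUB Ym_carrier z_eq])
      also have "four_block_mat (Ym 2 1 (\<lambda>_. sg)) (0\<^sub>m 2 m) (0\<^sub>m m 2) (Ym m k s) = Ym (2 + m) (Suc k) (sh sg s)"
        by (rule Ym_split1[symmetric])
      finally have zf: "z = (W * four_block_mat (1\<^sub>m 2) (0\<^sub>m 2 m) (0\<^sub>m m 2) UB) * Ym n (Suc k) (sh sg s)
          * transpose_mat (W * four_block_mat (1\<^sub>m 2) (0\<^sub>m 2 m) (0\<^sub>m m 2) UB)" using m by simp
      have U: "unitary_mat n (W * four_block_mat (1\<^sub>m 2) (0\<^sub>m 2 m) (0\<^sub>m m 2) UB)"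
        using unitary_mult[OF fr(1)] unitary_four_block[OF _ IH(1), of 2 "1\<^sub>m 2"] m
        by (auto simp: unitary_mat_def)
      have spos: "\<forall>j. sh sg s j > 0" using IH(3) sg(1) by (auto simp: sh_def)
      show ?thesis using zf U IH(2) spos m
        by (intro exI[of _ "W * four_block_mat (1\<^sub>m 2) (0\<^sub>m 2 m) (0\<^sub>m m 2) UB"] exI[of _ "Suc k"] exI[of _ "sh sg s"], auto)
    qed
  qed
qed

lemma det_diag: fixes d :: "nat \<Rightarrow> complex"
  shows "det (1\<^sub>m n - a \<cdot>\<^sub>m mat n n (\<lambda>(i,j). if i = j then d i else 0)) = (\<Prod>i<n. 1 - a * d i)"
proof -
  have eq: "1\<^sub>m n - a \<cdot>\<^sub>m mat n n (\<lambda>(i,j). if i = j then d i else 0) = mat n n (\<lambda>(i,j). if i = j then 1 - a * d i else 0)"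
    by (rule eq_matI, auto)
  have "det (mat n n (\<lambda>(i,j). if i = j then 1 - a * d i else 0)) = prod_list (diag_mat (mat n n (\<lambda>(i,j). if i = j then 1 - a * d i else 0)))"
    by (rule det_upper_triangular[of _ n], auto)
  also have "\<dots> = prod_list (map (\<lambda>i. 1 - a * d i) [0..<n])"
    unfolding diag_mat_def by (intro arg_cong[of _ _ prod_list] map_cong, auto)
  also have "\<dots> = (\<Prod>i<n. 1 - a * d i)"
    using prod.distinct_set_conv_list[of "[0..<n]" "\<lambda>i. 1 - a * d i"] by (simp add: lessThan_atLeast0)
  finally show ?thesis unfolding eq .
qed

lemma det_unitary_conj: fixes U M :: "complex mat"
  assumes U: "unitary_mat m U" and M: "M \<in> carrier_mat m m"
  shows "det (1\<^sub>m m - a \<cdot>\<^sub>m (U * M * adj U)) = det (1\<^sub>m m - a \<cdot>\<^sub>m M)"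
proof -
  have cU: "U \<in> carrier_mat m m" using U by (auto simp: unitary_mat_def)
  have aU: "adj U \<in> carrier_mat m m" using cU by simp
  have UM: "U * M \<in> carrier_mat m m" using cU M by simp
  have aM: "a \<cdot>\<^sub>m M \<in> carrier_mat m m" using M by simp
  have "U * (1\<^sub>m m - a \<cdot>\<^sub>m M) = U * 1\<^sub>m m - U * (a \<cdot>\<^sub>m M)"
    by (rule mult_minus_distrib_mat[OF cU one_carrier_mat aM])
  also have "\<dots> = U - a \<cdot>\<^sub>m (U * M)" using cU M by (simp add: mult_smult_distrib)
  finally have e1: "U * (1\<^sub>m m - a \<cdot>\<^sub>m M) = U - a \<cdot>\<^sub>m (U * M)" .
  have "(U - a \<cdot>\<^sub>m (U * M)) * adj U = U * adj U - (a \<cdot>\<^sub>m (U * M)) * adj U"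
    by (rule minus_mult_distrib_mat[OF cU _ aU], insert UM, simp)
  also have "\<dots> = 1\<^sub>m m - a \<cdot>\<^sub>m (U * M * adj U)" using U UM aU
    by (simp add: unitary_mat_def mult_smult_assoc_mat[OF UM aU])
  finally have e2: "U * (1\<^sub>m m - a \<cdot>\<^sub>m M) * adj U = 1\<^sub>m m - a \<cdot>\<^sub>m (U * M * adj U)" using e1 by simp
  have X: "1\<^sub>m m - a \<cdot>\<^sub>m M \<in> carrier_mat m m" using minus_carrier_mat[OF aM] .
  have UX: "U * (1\<^sub>m m - a \<cdot>\<^sub>m M) \<in> carrier_mat m m" using cU X by simp
  have "det (U * (1\<^sub>m m - a \<cdot>\<^sub>m M) * adj U) = det U * det (1\<^sub>m m - a \<cdot>\<^sub>m M) * det (adj U)"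
    using det_mult[OF UX aU] det_mult[OF cU X] by simp
  also have "\<dots> = det (1\<^sub>m m - a \<cdot>\<^sub>m M) * det (U * adj U)" using det_mult[OF cU aU] by simp
  also have "det (U * adj U) = 1" using U by (simp add: unitary_mat_def)
  finally show ?thesis using e2 by simp
qed

lemma smult_mult_adj: fixes z :: "complex mat" assumes "z \<in> carrier_mat m n"
  shows "(a \<cdot>\<^sub>m z) * adj z = a \<cdot>\<^sub>m (z * adj z)"
  using mult_smult_assoc_mat[OF assms adj_carrier_mat[OF assms]] .

definition qpoly :: "nat \<Rightarrow> (nat \<Rightarrow> real) \<Rightarrow> complex poly" where
  "qpoly k s = (\<Prod>i<k. [:1, - complex_of_real ((s i)\<^sup>2):])"

lemma poly_qpoly: "poly (qpoly k s) a = (\<Prod>i<k. 1 - a * complex_of_real ((s i)\<^sup>2))"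
  by (simp add: qpoly_def poly_prod algebra_simps)

lemma DgDg: assumes "m \<le> n"
  shows "Dg m n s * adj (Dg m n s) = mat m m (\<lambda>(i,j). if i = j then complex_of_real ((s i)\<^sup>2) else 0)"
proof (rule eq_matI)
  fix i j assume "i < dim_row (mat m m (\<lambda>(i,j). if i = j then complex_of_real ((s i)\<^sup>2) else 0))"
     "j < dim_col (mat m m (\<lambda>(i,j). if i = j then complex_of_real ((s i)\<^sup>2) else 0))"
  then have ij: "i < m" "j < m" by auto
  have "(Dg m n s * adj (Dg m n s)) $$ (i,j) = (\<Sum>l\<in>{0..<n}. Dg m n s $$ (i,l) * cnj (Dg m n s $$ (j,l)))"
    using ij by (simp add: scalar_prod_def row_def col_def Dg_def)
  also have "\<dots> = (\<Sum>l\<in>{0..<n}. if l = i then (if j = i then complex_of_real (s i) * complex_of_real (s i) else 0) else 0)"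
    using ij assms by (intro sum.cong refl, auto simp: Dg_def)
  also have "\<dots> = (if i = j then complex_of_real ((s i)\<^sup>2) else 0)"
    using ij assms by (simp add: power2_eq_square)
  finally show "(Dg m n s * adj (Dg m n s)) $$ (i,j) = mat m m (\<lambda>(i,j). if i = j then complex_of_real ((s i)\<^sup>2) else 0) $$ (i,j)"
    using ij by simp
qed (auto simp: Dg_def)

lemma pt_pt: "i < 2 * k \<Longrightarrow> pt (pt i) = i" unfolding pt_def by presburger
lemma pt_inj: "pt i = pt j \<Longrightarrow> i = j" unfolding pt_def by presburger
lemma pt_lt: "i < 2 * k \<Longrightarrow> pt i < 2 * k" unfolding pt_def by presburger

lemma YY: assumes "2 * k \<le> n"
  shows "Ym n k s * adj (Ym n k s) = mat n n (\<lambda>(i,j). if i = j \<and> i < 2 * k then complex_of_real ((s (i div 2))\<^sup>2) else 0)"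
proof (rule eq_matI)
  fix i j assume "i < dim_row (mat n n (\<lambda>(i,j). if i = j \<and> i < 2 * k then complex_of_real ((s (i div 2))\<^sup>2) else 0))"
     "j < dim_col (mat n n (\<lambda>(i,j). if i = j \<and> i < 2 * k then complex_of_real ((s (i div 2))\<^sup>2) else 0))"
  then have ij: "i < n" "j < n" by auto
  define sg where "sg = (\<lambda>i. if even i then complex_of_real (s (i div 2)) else - complex_of_real (s (i div 2)))"
  have Y: "Ym n k s $$ (a,b) = (if a < 2 * k \<and> b = pt a then sg a else 0)" if "a < n" "b < n" for a b
    using that by (simp add: Ym_def sg_def)
  have "(Ym n k s * adj (Ym n k s)) $$ (i,j) = (\<Sum>l\<in>{0..<n}. Ym n k s $$ (i,l) * cnj (Ym n k s $$ (j,l)))"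
    using ij by (simp add: scalar_prod_def row_def col_def)
  also have "\<dots> = (\<Sum>l\<in>{0..<n}. if l = pt i then (if i < 2 * k \<and> j = i then sg i * cnj (sg i) else 0) else 0)"
  proof (intro sum.cong refl)
    fix l assume l: "l \<in> {0..<n}"
    show "Ym n k s $$ (i,l) * cnj (Ym n k s $$ (j,l)) = (if l = pt i then (if i < 2 * k \<and> j = i then sg i * cnj (sg i) else 0) else 0)"
      using l ij Y[of i l] Y[of j l] pt_inj[of i j] by auto
  qed
  also have "\<dots> = (if i < 2 * k \<and> j = i then sg i * cnj (sg i) else 0)"
    using pt_lt[of i k] assms by auto
  also have "\<dots> = (if i = j \<and> i < 2 * k then complex_of_real ((s (i div 2))\<^sup>2) else 0)"
    by (auto simp: sg_def power2_eq_square)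
  finally show "(Ym n k s * adj (Ym n k s)) $$ (i,j) = mat n n (\<lambda>(i,j). if i = j \<and> i < 2 * k then complex_of_real ((s (i div 2))\<^sup>2) else 0) $$ (i,j)"
    using ij by simp
qed auto

lemma prod_pairs: fixes f :: "nat \<Rightarrow> 'a :: comm_monoid_mult"
  shows "(\<Prod>i<2 * k. f (i div 2)) = (\<Prod>j<k. f j)\<^sup>2"
proof (induct k)
  case (Suc k)
  have "2 * Suc k = Suc (Suc (2 * k))" by simp
  then have "(\<Prod>i<2 * Suc k. f (i div 2)) = (\<Prod>i<2 * k. f (i div 2)) * f k * f k"
    by (simp add: mult.assoc)
  then show ?case using Suc by (simp add: power2_eq_square algebra_simps)
qed simp

lemma prod_pairs_pad: fixes f :: "nat \<Rightarrow> 'a :: comm_monoid_mult"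
  assumes "2 * k \<le> n"
  shows "(\<Prod>i<n. if i < 2 * k then f (i div 2) else 1) = (\<Prod>j<k. f j)\<^sup>2"
proof -
  have "(\<Prod>i<n. if i < 2 * k then f (i div 2) else 1) = (\<Prod>i<2 * k. if i < 2 * k then f (i div 2) else 1)"
    using assms by (intro prod.mono_neutral_right, auto)
  also have "\<dots> = (\<Prod>i<2 * k. f (i div 2))" by simp
  finally show ?thesis using prod_pairs by simp
qed

lemma zadj: fixes U D V :: "complex mat"
  assumes U: "U \<in> carrier_mat m m" and D: "D \<in> carrier_mat m n" and V: "unitary_mat n V"
  shows "(U * D * V) * adj (U * D * V) = U * (D * adj D) * adj U"
proof -
  have cV: "V \<in> carrier_mat n n" using V by (auto simp: unitary_mat_def)
  have UD: "U * D \<in> carrier_mat m n" using U D by simp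
  have aU: "adj U \<in> carrier_mat m m" and aD: "adj D \<in> carrier_mat n m" and aV: "adj V \<in> carrier_mat n n"
    using U D cV by auto
  have aDU: "adj D * adj U \<in> carrier_mat n m" using aD aU by simp
  have "adj (U * D * V) = adj V * adj (U * D)" by (rule adj_mult[OF UD cV])
  also have "adj (U * D) = adj D * adj U" by (rule adj_mult[OF U D])
  finally have a: "adj (U * D * V) = adj V * (adj D * adj U)" .
  have "(U * D * V) * (adj V * (adj D * adj U)) = (U * D) * (V * (adj V * (adj D * adj U)))"
  proof -
    have X: "adj V * (adj D * adj U) \<in> carrier_mat n m" using aV aDU by simp
    show ?thesis by (rule assoc_mult_mat[OF UD cV X])
  qed
  also have "V * (adj V * (adj D * adj U)) = (V * adj V) * (adj D * adj U)"
    by (rule assoc_mult_mat[OF cV aV aDU, symmetric])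
  also have "V * adj V = 1\<^sub>m n" using V by (simp add: unitary_mat_def)
  also have "1\<^sub>m n * (adj D * adj U) = adj D * adj U" using left_mult_one_mat[OF aDU] .
  also have "(U * D) * (adj D * adj U) = U * (D * (adj D * adj U))" by (rule assoc_mult_mat[OF U D aDU])
  also have "D * (adj D * adj U) = D * adj D * adj U" by (rule assoc_mult_mat[OF D aD aU, symmetric])
  also have "U * (D * adj D * adj U) = U * (D * adj D) * adj U"
    by (rule assoc_mult_mat[OF U _ aU, symmetric], insert D aD, simp)
  finally show ?thesis using a by simp
qed

lemma poly_unique: fixes p q :: "complex poly"
  assumes "\<And>a. poly p a = poly q a" shows "p = q"
  using assms poly_eq_poly_eq_iff by blast

lemma poly_sq_unique: fixes p q :: "complex poly"
  assumes p0: "poly p 0 = 1" and q0: "poly q 0 = 1" and sq: "\<And>a. (poly p a)\<^sup>2 = (poly q a)\<^sup>2"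
  shows "p = q"
proof -
  have "p ^ 2 = q ^ 2" by (rule poly_unique, simp add: sq)
  then have "(p - q) * (p + q) = 0" by (simp add: power2_eq_square algebra_simps)
  moreover have "p + q \<noteq> 0"
  proof
    assume "p + q = 0"
    then have "poly (p + q) 0 = 0" by simp
    then show False using p0 q0 by simp
  qed
  ultimately show ?thesis by simp
qed

lemma det_nf_Dg: fixes U V :: "complex mat"
  assumes U: "unitary_mat m U" and V: "unitary_mat n V" and mn: "m \<le> n" and z: "z = U * Dg m n s * V"
  shows "det (1\<^sub>m m - (a \<cdot>\<^sub>m z) * adj z) = poly (qpoly m s) a"
proof -
  have cU: "U \<in> carrier_mat m m" using U by (auto simp: unitary_mat_def)
  have cV: "V \<in> carrier_mat n n" using V by (auto simp: unitary_mat_def)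
  have zc: "z \<in> carrier_mat m n" using z mult_carrier_mat[OF mult_carrier_mat[OF cU Dg_carrier] cV] by simp
  have "(a \<cdot>\<^sub>m z) * adj z = a \<cdot>\<^sub>m (z * adj z)" by (rule smult_mult_adj[OF zc])
  also have "z * adj z = U * (Dg m n s * adj (Dg m n s)) * adj U" unfolding z by (rule zadj[OF cU Dg_carrier V])
  finally have e: "(a \<cdot>\<^sub>m z) * adj z = a \<cdot>\<^sub>m (U * (Dg m n s * adj (Dg m n s)) * adj U)" .
  have DD: "Dg m n s * adj (Dg m n s) \<in> carrier_mat m m" using mult_carrier_mat[OF Dg_carrier adj_carrier_mat[OF Dg_carrier]] .
  have "det (1\<^sub>m m - (a \<cdot>\<^sub>m z) * adj z) = det (1\<^sub>m m - a \<cdot>\<^sub>m (Dg m n s * adj (Dg m n s)))"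
    unfolding e by (rule det_unitary_conj[OF U DD])
  also have "\<dots> = (\<Prod>i<m. 1 - a * complex_of_real ((s i)\<^sup>2))"
    unfolding DgDg[OF mn] by (rule det_diag)
  finally show ?thesis by (simp add: poly_qpoly)
qed

lemma Delta_I_nf: fixes U V :: "complex mat"
  assumes U: "unitary_mat m U" and V: "unitary_mat n V" and mn: "m \<le> n" and z: "z = U * Dg m n s * V"
  shows "Delta_poly (TypeI m n) z z = qpoly m s"
  unfolding Delta_poly.simps
proof (rule the_equality)
  show "\<forall>a. poly (qpoly m s) a = det (1\<^sub>m m - (a \<cdot>\<^sub>m z) * adj z)" using det_nf_Dg[OF assms] by simp
  fix p assume "\<forall>a. poly p a = det (1\<^sub>m m - (a \<cdot>\<^sub>m z) * adj z)"
  then show "p = qpoly m s" using det_nf_Dg[OF assms] by (intro poly_unique, simp)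
qed

lemma Delta_III_nf: fixes U :: "complex mat"
  assumes U: "unitary_mat n U" and z: "z = U * Dg n n s * transpose_mat U"
  shows "Delta_poly (TypeIII n) z z = qpoly n s"
proof -
  note d = det_nf_Dg[OF U unitary_transpose[OF U] le_refl z]
  show ?thesis unfolding Delta_poly.simps
  proof (rule the_equality)
    show "\<forall>a. poly (qpoly n s) a = det (1\<^sub>m n - (a \<cdot>\<^sub>m z) * adj z)" using d by simp
    fix p assume "\<forall>a. poly p a = det (1\<^sub>m n - (a \<cdot>\<^sub>m z) * adj z)"
    then show "p = qpoly n s" using d by (intro poly_unique, simp)
  qed
qed

lemma det_nf_Y: fixes U :: "complex mat"
  assumes U: "unitary_mat n U" and kn: "2 * k \<le> n" and z: "z = U * Ym n k s * transpose_mat U"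
  shows "det (1\<^sub>m n - (a \<cdot>\<^sub>m z) * adj z) = (poly (qpoly k s) a)\<^sup>2"
proof -
  have cU: "U \<in> carrier_mat n n" using U by (auto simp: unitary_mat_def)
  have zc: "z \<in> carrier_mat n n" using z mult_carrier_mat[OF mult_carrier_mat[OF cU Ym_carrier] transpose_carrier_mat[THEN iffD2, OF cU]] by simp
  have "(a \<cdot>\<^sub>m z) * adj z = a \<cdot>\<^sub>m (z * adj z)" by (rule smult_mult_adj[OF zc])
  also have "z * adj z = U * (Ym n k s * adj (Ym n k s)) * adj U" unfolding z
    by (rule zadj[OF cU Ym_carrier unitary_transpose[OF U]])
  finally have e: "(a \<cdot>\<^sub>m z) * adj z = a \<cdot>\<^sub>m (U * (Ym n k s * adj (Ym n k s)) * adj U)" .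
  have DD: "Ym n k s * adj (Ym n k s) \<in> carrier_mat n n" using mult_carrier_mat[OF Ym_carrier adj_carrier_mat[OF Ym_carrier]] .
  have YY': "Ym n k s * adj (Ym n k s) = mat n n (\<lambda>(i,j). if i = j then (if i < 2 * k then complex_of_real ((s (i div 2))\<^sup>2) else 0) else 0)"
    unfolding YY[OF kn] by (rule eq_matI, auto)
  have "det (1\<^sub>m n - (a \<cdot>\<^sub>m z) * adj z) = det (1\<^sub>m n - a \<cdot>\<^sub>m (Ym n k s * adj (Ym n k s)))"
    unfolding e by (rule det_unitary_conj[OF U DD])
  also have "\<dots> = (\<Prod>i<n. 1 - a * (if i < 2 * k then complex_of_real ((s (i div 2))\<^sup>2) else 0))"
    unfolding YY' by (rule det_diag)
  also have "\<dots> = (\<Prod>i<n. if i < 2 * k then (\<lambda>j. 1 - a * complex_of_real ((s j)\<^sup>2)) (i div 2) else 1)"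
    by (intro prod.cong refl, auto)
  also have "\<dots> = (\<Prod>j<k. 1 - a * complex_of_real ((s j)\<^sup>2))\<^sup>2" by (rule prod_pairs_pad[OF kn])
  finally show ?thesis by (simp add: poly_qpoly)
qed

lemma Delta_II_nf: fixes U :: "complex mat"
  assumes U: "unitary_mat n U" and kn: "2 * k \<le> n" and z: "z = U * Ym n k s * transpose_mat U"
  shows "Delta_poly (TypeII n) z z = qpoly k s"
proof -
  note d = det_nf_Y[OF assms]
  have q0: "poly (qpoly k s) 0 = 1" by (simp add: poly_qpoly)
  show ?thesis unfolding Delta_poly.simps
  proof (rule the_equality)
    show "poly (qpoly k s) 0 = 1 \<and> (\<forall>a. (poly (qpoly k s) a)\<^sup>2 = det (1\<^sub>m n - (a \<cdot>\<^sub>m z) * adj z))"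
      using d q0 by simp
    fix p assume "poly p 0 = 1 \<and> (\<forall>a. (poly p a)\<^sup>2 = det (1\<^sub>m n - (a \<cdot>\<^sub>m z) * adj z))"
    then show "p = qpoly k s" using d q0 by (intro poly_sq_unique, auto)
  qed
qed

lemma coeff_binom: "coeff ([:1, -1:] ^ r :: complex poly) l = (-1) ^ l * of_nat (r choose l)"
proof (cases "l \<le> r")
  case True
  then show ?thesis by (simp add: coeff_linear_poly_power)
next
  case False
  have "degree ([:1, -1:] ^ r :: complex poly) \<le> r"
    by (rule order.trans[OF degree_power_le], simp)
  then have "coeff ([:1, -1:] ^ r :: complex poly) l = 0" using False by (intro coeff_eq_0, auto)
  then show ?thesis using False by simp
qed

lemma degree_binom: "degree ([:1, -1:] ^ r :: complex poly) = r"
  by (simp add: degree_power_eq)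

lemma degree_qpoly: "degree (qpoly k s) \<le> k"
proof -
  have "degree (qpoly k s) \<le> (\<Sum>i<k. degree [:1, - complex_of_real ((s i)\<^sup>2):])"
    unfolding qpoly_def using degree_prod_sum_le[of "{..<k}" "\<lambda>i. [:1, - complex_of_real ((s i)\<^sup>2):]"] by (simp add: o_def)
  also have "\<dots> \<le> (\<Sum>i<k. 1)" by (intro sum_mono, simp)
  finally show ?thesis by simp
qed

lemma qpoly_one: "qpoly k (\<lambda>_. 1) = [:1, -1:] ^ k"
  by (simp add: qpoly_def)

lemma coeff_top_prod: fixes c :: "nat \<Rightarrow> complex"
  shows "coeff (\<Prod>i<k. [:1, c i:]) k = (\<Prod>i<k. c i) \<and> degree (\<Prod>i<k. [:1, c i:]) \<le> k"
proof (induct k)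
  case (Suc k)
  let ?q = "\<Prod>i<k. [:1, c i:]"
  have e: "(\<Prod>i<Suc k. [:1, c i:]) = ?q + pCons 0 (Polynomial.smult (c k) ?q)"
    by (simp add: mult_pCons_right)
  have "coeff ?q (Suc k) = 0" using Suc by (intro coeff_eq_0, auto)
  then have c: "coeff (\<Prod>i<Suc k. [:1, c i:]) (Suc k) = (\<Prod>i<Suc k. c i)"
    unfolding e using Suc by (simp add: mult.commute)
  have "degree (\<Prod>i<Suc k. [:1, c i:]) \<le> Suc k"
  proof -
    have "degree (\<Prod>i<Suc k. [:1, c i:]) \<le> (\<Sum>i<Suc k. degree [:1, c i:])"
      using degree_prod_sum_le[of "{..<Suc k}" "\<lambda>i. [:1, c i:]"] by (simp add: o_def)
    also have "\<dots> \<le> (\<Sum>i<Suc k. 1)" by (intro sum_mono, simp)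
    finally show ?thesis by simp
  qed
  then show ?case using c by simp
qed simp

lemma qpoly_char: fixes p :: "complex poly"
  assumes deg: "degree p \<le> r" and c0: "coeff p 0 = 1"
  and cl: "\<And>l. 1 \<le> l \<Longrightarrow> l \<le> r \<Longrightarrow> (-1) ^ l * coeff p l = of_nat (r choose l)"
  shows "p = [:1, -1:] ^ r"
proof (rule poly_eqI)
  fix l
  show "coeff p l = coeff ([:1, -1:] ^ r) l"
  proof (cases "l = 0")
    case True then show ?thesis using c0 by (simp add: coeff_binom)
  next
    case False
    show ?thesis
    proof (cases "l \<le> r")
      case True
      have "coeff p l = (-1) ^ l * ((-1) ^ l * coeff p l)" by (simp flip: power_mult_distrib)
      also have "\<dots> = (-1) ^ l * of_nat (r choose l)" using cl[of l] True False by simp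
      finally show ?thesis by (simp add: coeff_binom)
    next
      case False
      then show ?thesis using deg by (simp add: coeff_binom coeff_eq_0)
    qed
  qed
qed

lemma Delta_comp_binom: "Delta_poly C z w = [:1, -1:] ^ r \<Longrightarrow> Delta_comp C l z w = of_nat (r choose l)"
  unfolding Delta_comp_def by (simp add: coeff_binom flip: power_mult_distrib)

lemma comp_to_poly: fixes C z
  assumes deg: "degree (Delta_poly C z z) \<le> r" and c0: "coeff (Delta_poly C z z) 0 = 1"
  and cl: "\<forall>l. 1 \<le> l \<and> l \<le> r \<longrightarrow> Delta_comp C l z z = of_nat (r choose l)"
  shows "Delta_poly C z z = [:1, -1:] ^ r"
  by (rule qpoly_char[OF deg c0], insert cl, auto simp: Delta_comp_def)

lemma qpoly_coeff0: "coeff (qpoly k s) 0 = 1"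
  by (simp add: poly_0_coeff_0[symmetric] poly_qpoly)

lemma qpoly_root: assumes "qpoly k s = [:1, -1:] ^ r" "r \<ge> 1" "i < k" "s i \<noteq> 0"
  shows "(s i)\<^sup>2 = 1"
proof -
  let ?a = "complex_of_real (1 / (s i)\<^sup>2)"
  have "poly (qpoly k s) ?a = 0" unfolding poly_qpoly using assms(3,4)
    by (intro prod_zero, auto intro!: bexI[of _ i] simp flip: of_real_mult)
  then have "(1 - ?a) ^ r = 0" using assms(1) by simp
  then have "?a = 1" using assms(2) by simp
  then have "1 / (s i)\<^sup>2 = 1" by (metis of_real_1 of_real_eq_iff)
  then show ?thesis using assms(4) by (simp add: field_simps)
qed

lemma Dg_cong: "(\<And>i. i < m \<Longrightarrow> s i = t i) \<Longrightarrow> m \<le> n \<Longrightarrow> Dg m n s = Dg m n t"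
  by (rule eq_matI, auto simp: Dg_def)

lemma qpoly_all_one: assumes q: "qpoly m s = [:1, -1:] ^ m" and m: "m \<ge> 1" and s: "\<forall>i. s i \<ge> 0"
  shows "\<forall>i<m. s i = 1"
proof (intro allI impI)
  fix i assume i: "i < m"
  have "coeff (qpoly m s) m = (\<Prod>i<m. - complex_of_real ((s i)\<^sup>2))"
    unfolding qpoly_def using coeff_top_prod[of "\<lambda>i. - complex_of_real ((s i)\<^sup>2)" m] by simp
  moreover have "coeff (qpoly m s) m \<noteq> 0" unfolding q coeff_binom by simp
  ultimately have "(\<Prod>i<m. - complex_of_real ((s i)\<^sup>2)) \<noteq> 0" by simp
  then have "s i \<noteq> 0" using i by auto
  then have "(s i)\<^sup>2 = 1" using qpoly_root[OF q m i] by simp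
  then show "s i = 1" using s[rule_format, of i] by (simp add: power2_eq_1_iff)
qed

lemma shilov_I: assumes m1: "1 \<le> m" and mn: "m \<le> n"
  shows "shilov_boundary (TypeI m n) = {z \<in> cartan_space (TypeI m n). \<forall>l. 1 \<le> l \<and> l \<le> cartan_rank (TypeI m n) \<longrightarrow>
        Delta_comp (TypeI m n) l z z = of_nat (cartan_rank (TypeI m n) choose l)}"
proof -
  have e: "cartan_e (TypeI m n) = Dg m n (\<lambda>_. 1)" by (rule eq_matI, auto simp: Dg_def)
  show ?thesis
  proof (intro equalityI subsetI)
    fix z assume "z \<in> shilov_boundary (TypeI m n)"
    then obtain U V where UV: "unitary_mat m U" "unitary_mat n V" "z = U * Dg m n (\<lambda>_. 1) * V"
      unfolding shilov_boundary_def e by auto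
    have cU: "U \<in> carrier_mat m m" and cV: "V \<in> carrier_mat n n" using UV by (auto simp: unitary_mat_def)
    have zc: "z \<in> carrier_mat m n" using UV(3) mult_carrier_mat[OF mult_carrier_mat[OF cU Dg_carrier] cV] by simp
    have "Delta_poly (TypeI m n) z z = [:1, -1:] ^ m" using Delta_I_nf[OF UV(1,2) mn UV(3)] qpoly_one by simp
    then show "z \<in> {z \<in> cartan_space (TypeI m n). \<forall>l. 1 \<le> l \<and> l \<le> cartan_rank (TypeI m n) \<longrightarrow>
        Delta_comp (TypeI m n) l z z = of_nat (cartan_rank (TypeI m n) choose l)}"
      using zc by (auto simp: Delta_comp_binom)
  next
    fix z assume z: "z \<in> {z \<in> cartan_space (TypeI m n). \<forall>l. 1 \<le> l \<and> l \<le> cartan_rank (TypeI m n) \<longrightarrow>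
        Delta_comp (TypeI m n) l z z = of_nat (cartan_rank (TypeI m n) choose l)}"
    then have zc: "z \<in> carrier_mat m n" and cond: "\<forall>l. 1 \<le> l \<and> l \<le> m \<longrightarrow> Delta_comp (TypeI m n) l z z = of_nat (m choose l)"
      by auto
    obtain U V s where nf: "unitary_mat m U" "unitary_mat n V" "\<forall>i. s i \<ge> 0" "z = U * Dg m n s * V"
      using svd[OF zc mn] by auto
    have D: "Delta_poly (TypeI m n) z z = qpoly m s" by (rule Delta_I_nf[OF nf(1,2) mn nf(4)])
    have "Delta_poly (TypeI m n) z z = [:1, -1:] ^ m"
      by (rule comp_to_poly[OF _ _ cond], unfold D, rule degree_qpoly, rule qpoly_coeff0)
    then have "\<forall>i<m. s i = 1" using qpoly_all_one[OF _ m1 nf(3)] D by simp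
    then have "Dg m n s = Dg m n (\<lambda>_. 1)" using mn by (intro Dg_cong, auto)
    then have ze: "z = (\<lambda>x. U * x * V) (cartan_e (TypeI m n))" using nf(4) e by simp
    have kK: "(\<lambda>x. U * x * V) \<in> cartan_K (TypeI m n)" using nf(1,2) by auto
    show "z \<in> shilov_boundary (TypeI m n)" unfolding shilov_boundary_def
      by (rule CollectI, rule exI[of _ "\<lambda>x. U * x * V"], rule conjI[OF ze kK])
  qed
qed

lemma shilov_III: assumes n1: "1 \<le> n"
  shows "shilov_boundary (TypeIII n) = {z \<in> cartan_space (TypeIII n). \<forall>l. 1 \<le> l \<and> l \<le> cartan_rank (TypeIII n) \<longrightarrow>
        Delta_comp (TypeIII n) l z z = of_nat (cartan_rank (TypeIII n) choose l)}"
proof -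
  have e: "cartan_e (TypeIII n) = Dg n n (\<lambda>_. 1)" by (rule eq_matI, auto simp: Dg_def)
  show ?thesis
  proof (intro equalityI subsetI)
    fix z assume "z \<in> shilov_boundary (TypeIII n)"
    then obtain U where U: "unitary_mat n U" "z = U * Dg n n (\<lambda>_. 1) * transpose_mat U"
      unfolding shilov_boundary_def e by auto
    have cU: "U \<in> carrier_mat n n" using U by (auto simp: unitary_mat_def)
    have cUT: "transpose_mat U \<in> carrier_mat n n" using cU by simp
    have UD: "U * Dg n n (\<lambda>_. 1) \<in> carrier_mat n n" using mult_carrier_mat[OF cU Dg_carrier] .
    have zc: "z \<in> carrier_mat n n" using U(2) mult_carrier_mat[OF UD cUT] by simp
    have "transpose_mat z = transpose_mat (transpose_mat U) * transpose_mat (U * Dg n n (\<lambda>_. 1))"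
      unfolding U(2) by (rule transpose_mult[OF UD cUT])
    also have "transpose_mat (U * Dg n n (\<lambda>_. 1)) = transpose_mat (Dg n n (\<lambda>_. 1)) * transpose_mat U"
      by (rule transpose_mult[OF cU Dg_carrier])
    also have "transpose_mat (Dg n n (\<lambda>_. 1)) = Dg n n (\<lambda>_. 1)" by (rule eq_matI, auto simp: Dg_def)
    also have "transpose_mat (transpose_mat U) * (Dg n n (\<lambda>_. 1) * transpose_mat U) = z"
      unfolding U(2) using assoc_mult_mat[OF cU Dg_carrier cUT] by simp
    finally have sym: "transpose_mat z = z" .
    have "Delta_poly (TypeIII n) z z = [:1, -1:] ^ n" using Delta_III_nf[OF U] qpoly_one by simp
    then show "z \<in> {z \<in> cartan_space (TypeIII n). \<forall>l. 1 \<le> l \<and> l \<le> cartan_rank (TypeIII n) \<longrightarrow>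
        Delta_comp (TypeIII n) l z z = of_nat (cartan_rank (TypeIII n) choose l)}"
      using zc sym by (auto simp: Delta_comp_binom)
  next
    fix z assume z: "z \<in> {z \<in> cartan_space (TypeIII n). \<forall>l. 1 \<le> l \<and> l \<le> cartan_rank (TypeIII n) \<longrightarrow>
        Delta_comp (TypeIII n) l z z = of_nat (cartan_rank (TypeIII n) choose l)}"
    then have zc: "z \<in> carrier_mat n n" and sym: "transpose_mat z = z"
      and cond: "\<forall>l. 1 \<le> l \<and> l \<le> n \<longrightarrow> Delta_comp (TypeIII n) l z z = of_nat (n choose l)"
      by auto
    obtain U s where nf: "unitary_mat n U" "\<forall>i. s i \<ge> 0" "z = U * Dg n n s * transpose_mat U"
      using takagi[OF zc sym] by auto
    have D: "Delta_poly (TypeIII n) z z = qpoly n s" by (rule Delta_III_nf[OF nf(1) nf(3)])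
    have "Delta_poly (TypeIII n) z z = [:1, -1:] ^ n"
      by (rule comp_to_poly[OF _ _ cond], unfold D, rule degree_qpoly, rule qpoly_coeff0)
    then have "\<forall>i<n. s i = 1" using qpoly_all_one[OF _ n1 nf(2)] D by simp
    then have "Dg n n s = Dg n n (\<lambda>_. 1)" by (intro Dg_cong, auto)
    then have ze: "z = (\<lambda>x. U * x * transpose_mat U) (cartan_e (TypeIII n))" using nf(3) e by simp
    have kK: "(\<lambda>x. U * x * transpose_mat U) \<in> cartan_K (TypeIII n)" using nf(1) by auto
    show "z \<in> shilov_boundary (TypeIII n)" unfolding shilov_boundary_def
      by (rule CollectI, rule exI[of _ "\<lambda>x. U * x * transpose_mat U"], rule conjI[OF ze kK])
  qed
qed

lemma Ym_cong: "(\<And>j. j < k \<Longrightarrow> s j = t j) \<Longrightarrow> Ym n k s = Ym n k t"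
proof (rule eq_matI)
  fix i j assume h: "\<And>j. j < k \<Longrightarrow> s j = t j" "i < dim_row (Ym n k t)" "j < dim_col (Ym n k t)"
  have "i < 2 * k \<Longrightarrow> i div 2 < k" by auto
  then show "Ym n k s $$ (i, j) = Ym n k t $$ (i, j)" using h by (auto simp: Ym_def)
qed auto

lemma cartan_e_II_skew: "transpose_mat (cartan_e (TypeII n)) = - cartan_e (TypeII n)"
  by (rule eq_matI, auto)

lemma shilov_II: assumes n2: "2 \<le> n"
  shows "shilov_boundary (TypeII n) = {z \<in> cartan_space (TypeII n). \<forall>l. 1 \<le> l \<and> l \<le> cartan_rank (TypeII n) \<longrightarrow>
        Delta_comp (TypeII n) l z z = of_nat (cartan_rank (TypeII n) choose l)}"
proof -
  let ?r = "n div 2"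
  have e: "cartan_e (TypeII n) = Ym n ?r (\<lambda>_. 1)" by (rule cartan_e_II)
  have rn: "2 * ?r \<le> n" by simp
  have r1: "?r \<ge> 1" using n2 by simp
  show ?thesis
  proof (intro equalityI subsetI)
    fix z assume "z \<in> shilov_boundary (TypeII n)"
    then obtain U where U: "unitary_mat n U" "z = U * cartan_e (TypeII n) * transpose_mat U"
      unfolding shilov_boundary_def by auto
    have cU: "U \<in> carrier_mat n n" using U by (auto simp: unitary_mat_def)
    have cUT: "transpose_mat U \<in> carrier_mat n n" using cU by simp
    have ce: "cartan_e (TypeII n) \<in> carrier_mat n n" by simp
    have UD: "U * cartan_e (TypeII n) \<in> carrier_mat n n" using mult_carrier_mat[OF cU ce] .
    have zc: "z \<in> carrier_mat n n" using U(2) mult_carrier_mat[OF UD cUT] by simp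
    have "transpose_mat z = transpose_mat (transpose_mat U) * transpose_mat (U * cartan_e (TypeII n))"
      unfolding U(2) by (rule transpose_mult[OF UD cUT])
    also have "transpose_mat (U * cartan_e (TypeII n)) = transpose_mat (cartan_e (TypeII n)) * transpose_mat U"
      by (rule transpose_mult[OF cU ce])
    also have "transpose_mat (cartan_e (TypeII n)) = - cartan_e (TypeII n)" by (rule cartan_e_II_skew)
    also have "transpose_mat (transpose_mat U) * (- cartan_e (TypeII n) * transpose_mat U) = - z"
      unfolding U(2) using assoc_mult_mat[OF cU ce cUT] cU ce cUT
      by (simp add: uminus_mult_left_mat uminus_mult_right_mat)
    finally have sk: "transpose_mat z = - z" .
    have "Delta_poly (TypeII n) z z = [:1, -1:] ^ ?r"
      using Delta_II_nf[OF U(1) rn] U(2) e qpoly_one by simp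
    then show "z \<in> {z \<in> cartan_space (TypeII n). \<forall>l. 1 \<le> l \<and> l \<le> cartan_rank (TypeII n) \<longrightarrow>
        Delta_comp (TypeII n) l z z = of_nat (cartan_rank (TypeII n) choose l)}"
      using zc sk by (auto simp: Delta_comp_binom)
  next
    fix z assume z: "z \<in> {z \<in> cartan_space (TypeII n). \<forall>l. 1 \<le> l \<and> l \<le> cartan_rank (TypeII n) \<longrightarrow>
        Delta_comp (TypeII n) l z z = of_nat (cartan_rank (TypeII n) choose l)}"
    then have zc: "z \<in> carrier_mat n n" and sk: "transpose_mat z = - z"
      and cond: "\<forall>l. 1 \<le> l \<and> l \<le> ?r \<longrightarrow> Delta_comp (TypeII n) l z z = of_nat (?r choose l)"
      by auto
    obtain U k s where nf: "unitary_mat n U" "2 * k \<le> n" "\<forall>j. s j > 0" "z = U * Ym n k s * transpose_mat U"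
      using youla[OF zc sk] by auto
    have D: "Delta_poly (TypeII n) z z = qpoly k s" by (rule Delta_II_nf[OF nf(1,2,4)])
    have kr: "k \<le> ?r" using nf(2) by simp
    have q: "qpoly k s = [:1, -1:] ^ ?r"
      unfolding D[symmetric]
      by (rule comp_to_poly[OF _ _ cond], unfold D, rule order.trans[OF degree_qpoly kr], rule qpoly_coeff0)
    have "?r \<le> k" using degree_qpoly[of k s] unfolding q degree_binom .
    then have k: "k = ?r" using kr by simp
    have "\<forall>j<k. s j = 1"
    proof (intro allI impI)
      fix j assume j: "j < k"
      have "(s j)\<^sup>2 = 1" using qpoly_root[OF q r1 j] nf(3) by (metis less_irrefl)
      moreover have "s j > 0" using nf(3) by simp
      ultimately show "s j = 1" by (simp add: power2_eq_1_iff)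
    qed
    then have "Ym n k s = Ym n k (\<lambda>_. 1)" by (intro Ym_cong, auto)
    then have ze: "z = (\<lambda>x. U * x * transpose_mat U) (cartan_e (TypeII n))" using nf(4) e k by simp
    have kK: "(\<lambda>x. U * x * transpose_mat U) \<in> cartan_K (TypeII n)" using nf(1) by auto
    show "z \<in> shilov_boundary (TypeII n)" unfolding shilov_boundary_def
      by (rule CollectI, rule exI[of _ "\<lambda>x. U * x * transpose_mat U"], rule conjI[OF ze kK])
  qed
qed

lemma householder:
  fixes x :: "nat \<Rightarrow> real"
  assumes x1: "(\<Sum>i<n. (x i)\<^sup>2) = 1" and n: "n > 0"
  defines "w \<equiv> \<lambda>i. (if i = 0 then 1 else 0) - x i"
  defines "nw \<equiv> (\<Sum>i<n. (w i)\<^sup>2)"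
  defines "H \<equiv> mat n n (\<lambda>(i,j). (if i = j then 1 else 0) - 2 * w i * w j / nw)"
  shows "H \<in> carrier_mat n n" "H * transpose_mat H = 1\<^sub>m n" "\<And>i. i < n \<Longrightarrow> H $$ (i,0) = x i"
proof -
  show cH: "H \<in> carrier_mat n n" unfolding H_def by simp
  have HT: "transpose_mat H = H" unfolding H_def by (rule eq_matI, auto simp: mult.commute)
  have "H * H = 1\<^sub>m n"
  proof (rule eq_matI)
    fix i j assume "i < dim_row (1\<^sub>m n :: real mat)" "j < dim_col (1\<^sub>m n :: real mat)"
    then have ij: "i < n" "j < n" by auto
    have "(H * H) $$ (i,j) = (\<Sum>k<n. ((if i = k then 1 else 0) - 2 * w i * w k / nw) * ((if k = j then 1 else 0) - 2 * w k * w j / nw))"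
      using ij unfolding H_def by (simp add: scalar_prod_def row_def col_def lessThan_atLeast0)
    also have "\<dots> = (\<Sum>k<n. (if i = k then 1 else 0) * (if k = j then 1 else 0))
        - (\<Sum>k<n. (if i = k then 1 else 0) * (2 * w k * w j / nw))
        - (\<Sum>k<n. (2 * w i * w k / nw) * (if k = j then 1 else 0))
        + (\<Sum>k<n. (2 * w i * w k / nw) * (2 * w k * w j / nw))"
      by (simp add: algebra_simps sum.distrib sum_subtractf)
    also have "(\<Sum>k<n. (if i = k then 1 else 0) * (if k = j then 1 else (0::real))) = (if i = j then 1 else 0)"
      using ij by (simp add: if_distrib[of "\<lambda>a. a * _"] cong: if_cong)
    also have "(\<Sum>k<n. (if i = k then 1 else 0) * (2 * w k * w j / nw)) = 2 * w i * w j / nw"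
    proof -
      have "(\<Sum>k<n. (if i = k then 1 else 0) * (2 * w k * w j / nw)) = (\<Sum>k<n. if k = i then 2 * w i * w j / nw else 0)"
        by (intro sum.cong refl, auto)
      also have "\<dots> = 2 * w i * w j / nw" using ij by simp
      finally show ?thesis .
    qed
    also have "(\<Sum>k<n. (2 * w i * w k / nw) * (if k = j then 1 else 0)) = 2 * w i * w j / nw"
      using ij by (simp add: if_distrib[of "\<lambda>a. _ * a"] cong: if_cong)
    also have "(\<Sum>k<n. (2 * w i * w k / nw) * (2 * w k * w j / nw)) = 4 * w i * w j * nw / (nw * nw)"
      unfolding nw_def by (simp add: sum_divide_distrib[symmetric] sum_distrib_left sum_distrib_right power2_eq_square algebra_simps)
    also have "(if i = j then 1 else 0) - 2 * w i * w j / nw - 2 * w i * w j / nw + 4 * w i * w j * nw / (nw * nw)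
        = (if i = j then 1 else (0::real))"
      by (cases "nw = 0", auto simp: field_simps)
    finally show "(H * H) $$ (i,j) = 1\<^sub>m n $$ (i,j)" using ij by simp
  qed (auto simp: H_def)
  then show "H * transpose_mat H = 1\<^sub>m n" using HT by simp
  have nw: "nw = 2 * (1 - x 0)"
  proof -
    have "nw = (\<Sum>i<n. (if i = 0 then 1 else 0) - (if i = 0 then 2 * x 0 else 0) + (x i)\<^sup>2)"
      unfolding nw_def w_def by (intro sum.cong refl, auto simp: power2_eq_square algebra_simps)
    also have "\<dots> = 1 - 2 * x 0 + 1" using n x1 by (simp add: sum.distrib sum_subtractf)
    finally show ?thesis by simp
  qed
  show "H $$ (i,0) = x i" if i: "i < n" for i
  proof (cases "nw = 0")
    case True
    then have "\<forall>k\<in>{..<n}. (w k)\<^sup>2 = 0" unfolding nw_def by (subst sum_nonneg_eq_0_iff[symmetric], auto)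
    then have "w i = 0" using i by auto
    then show ?thesis using i n True unfolding H_def w_def by auto
  next
    case False
    have "H $$ (i,0) = (if i = 0 then 1 else 0) - 2 * w i * w 0 / nw" unfolding H_def using i n by simp
    also have "2 * w 0 / nw = 1" using False unfolding nw w_def by auto
    then have "2 * w i * w 0 / nw = w i" by (metis mult.commute mult.left_commute times_divide_eq_right mult_1_right)
    finally show ?thesis unfolding w_def by simp
  qed
qed

lemma orth_mult: fixes H R :: "real mat"
  assumes H: "H \<in> carrier_mat n n" and R: "R \<in> carrier_mat n n"
  and HH: "H * transpose_mat H = 1\<^sub>m n" and RR: "R * transpose_mat R = 1\<^sub>m n"
  shows "(H * R) * transpose_mat (H * R) = 1\<^sub>m n"
proof -
  have HT: "transpose_mat H \<in> carrier_mat n n" and RT: "transpose_mat R \<in> carrier_mat n n" using H R by auto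
  have RTHT: "transpose_mat R * transpose_mat H \<in> carrier_mat n n" using RT HT by simp
  have "transpose_mat (H * R) = transpose_mat R * transpose_mat H" by (rule transpose_mult[OF H R])
  moreover have "(H * R) * (transpose_mat R * transpose_mat H) = H * (R * (transpose_mat R * transpose_mat H))"
    by (rule assoc_mult_mat[OF H R RTHT])
  moreover have "R * (transpose_mat R * transpose_mat H) = (R * transpose_mat R) * transpose_mat H"
    by (rule assoc_mult_mat[OF R RT HT, symmetric])
  ultimately show ?thesis using RR HH HT by simp
qed

lemma exists_SO_col: fixes x :: "nat \<Rightarrow> real"
  assumes n: "n \<ge> 2" and x1: "(\<Sum>i<n. (x i)\<^sup>2) = 1"
  shows "\<exists>B :: real mat. B \<in> carrier_mat n n \<and> B * transpose_mat B = 1\<^sub>m n \<and> det B = 1 \<and> (\<forall>i<n. B $$ (i,0) = x i)"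
proof -
  obtain H :: "real mat" where H: "H \<in> carrier_mat n n" "H * transpose_mat H = 1\<^sub>m n" "\<And>i. i < n \<Longrightarrow> H $$ (i,0) = x i"
  proof -
    have n0: "n > 0" using n by simp
    show ?thesis by (rule that[OF householder[OF x1 n0]])
  qed
  have HT: "transpose_mat H \<in> carrier_mat n n" using H by simp
  have "det H * det H = 1" using det_mult[OF H(1) HT] H(2) det_transpose[OF H(1)] by simp
  then have "(det H)\<^sup>2 = 1" by (simp add: power2_eq_square)
  then have dH: "det H = 1 \<or> det H = -1" by (simp add: power2_eq_1_iff)
  show ?thesis
  proof (cases "det H = 1")
    case True then show ?thesis using H by blast
  next
    case False
    then have dH': "det H = -1" using dH by simp
    define R :: "real mat" where "R = mat n n (\<lambda>(i,j). if i = j then (if i = n - 1 then -1 else 1) else 0)"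
    have R: "R \<in> carrier_mat n n" unfolding R_def by simp
    have RT: "transpose_mat R = R" unfolding R_def by (rule eq_matI, auto)
    have RR: "R * transpose_mat R = 1\<^sub>m n"
    proof (rule eq_matI)
      fix i j assume "i < dim_row (1\<^sub>m n :: real mat)" "j < dim_col (1\<^sub>m n :: real mat)"
      then have ij: "i < n" "j < n" by auto
      have "(R * transpose_mat R) $$ (i,j) = (\<Sum>k<n. R $$ (i,k) * R $$ (k,j))"
        using ij unfolding RT by (simp add: scalar_prod_def row_def col_def lessThan_atLeast0 R_def)
      also have "\<dots> = (\<Sum>k<n. if k = i then (if i = j then 1 else 0) else 0)"
        using ij by (intro sum.cong refl, auto simp: R_def)
      also have "\<dots> = 1\<^sub>m n $$ (i,j)" using ij by simp
      finally show "(R * transpose_mat R) $$ (i,j) = 1\<^sub>m n $$ (i,j)" .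
    qed (auto simp: R_def)
    have "det R = prod_list (diag_mat R)" by (rule det_upper_triangular[OF _ R], auto simp: R_def)
    also have "\<dots> = prod_list (map (\<lambda>i. if i = n - 1 then -1 else 1) [0..<n])"
      unfolding diag_mat_def R_def by (intro arg_cong[of _ _ prod_list] map_cong, auto)
    also have "\<dots> = (\<Prod>i\<in>{0..<n}. if i = n - 1 then -1 else (1::real))"
      using prod.distinct_set_conv_list[of "[0..<n]" "\<lambda>i. if i = n - 1 then -1 else (1::real)"] by simp
    also have "\<dots> = -1" using n by (simp add: prod.If_cases)
    finally have dR: "det R = -1" .
    have B: "H * R \<in> carrier_mat n n" using H(1) R by simp
    have "det (H * R) = 1" using det_mult[OF H(1) R] dH' dR by simp
    moreover have "(H * R) * transpose_mat (H * R) = 1\<^sub>m n" by (rule orth_mult[OF H(1) R H(2) RR])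
    moreover have "\<forall>i<n. (H * R) $$ (i,0) = x i"
    proof (intro allI impI)
      fix i assume i: "i < n"
      have "(H * R) $$ (i,0) = (\<Sum>k<n. H $$ (i,k) * R $$ (k,0))"
        using i n H(1) R by (simp add: scalar_prod_def row_def col_def lessThan_atLeast0)
      also have "\<dots> = (\<Sum>k<n. if k = 0 then H $$ (i,0) else 0)"
        using n by (intro sum.cong refl, auto simp: R_def)
      also have "\<dots> = x i" using n H(3)[OF i] by simp
      finally show "(H * R) $$ (i,0) = x i" .
    qed
    ultimately show ?thesis using B by blast
  qed
qed

lemma Delta_IV_1: "Delta_comp (TypeIV n) 1 z w = 2 * sesq z w"
  by (simp add: Delta_comp_def)
lemma Delta_IV_2: "Delta_comp (TypeIV n) 2 z w = qform z * cnj (qform w)"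
  by (simp add: Delta_comp_def numeral_2_eq_2)

lemma cond_IV: "(\<forall>l. 1 \<le> l \<and> l \<le> (2::nat) \<longrightarrow> Delta_comp (TypeIV n) l z z = of_nat (2 choose l))
   \<longleftrightarrow> sesq z z = 1 \<and> qform z * cnj (qform z) = 1"
proof -
  have q: "(\<forall>l. 1 \<le> l \<and> l \<le> (2::nat) \<longrightarrow> P l) \<longleftrightarrow> P 1 \<and> P 2" for P
  proof
    assume "\<forall>l. 1 \<le> l \<and> l \<le> (2::nat) \<longrightarrow> P l" then show "P 1 \<and> P 2" by auto
  next
    assume h: "P 1 \<and> P 2"
    show "\<forall>l. 1 \<le> l \<and> l \<le> (2::nat) \<longrightarrow> P l"
    proof (intro allI impI)
      fix l :: nat assume "1 \<le> l \<and> l \<le> 2"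
      then have "l = 1 \<or> l = 2" by auto
      then show "P l" using h by auto
    qed
  qed
  show ?thesis unfolding q Delta_IV_1 Delta_IV_2 by simp
qed

lemma Ae_index: fixes B :: "real mat" assumes B: "B \<in> carrier_mat n n" and i: "i < n"
  shows "(map_mat complex_of_real B * cartan_e (TypeIV n)) $$ (i,0) = complex_of_real (B $$ (i,0))"
proof -
  have "(map_mat complex_of_real B * cartan_e (TypeIV n)) $$ (i,0) = (\<Sum>k<n. complex_of_real (B $$ (i,k)) * (if k = 0 then 1 else 0))"
    using B i by (simp add: scalar_prod_def row_def col_def lessThan_atLeast0)
  also have "\<dots> = (\<Sum>k<n. if k = 0 then complex_of_real (B $$ (i,0)) else 0)" by (intro sum.cong refl, auto)
  also have "\<dots> = complex_of_real (B $$ (i,0))" using i by simp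
  finally show ?thesis .
qed

lemma col0_norm: fixes B :: "real mat" assumes B: "B \<in> carrier_mat n n" and BB: "B * transpose_mat B = 1\<^sub>m n" and n: "n > 0"
  shows "(\<Sum>i<n. (B $$ (i,0))\<^sup>2) = 1"
proof -
  have BT: "transpose_mat B \<in> carrier_mat n n" using B by simp
  have "transpose_mat B * B = 1\<^sub>m n" using mat_mult_left_right_inverse[OF B BT BB] .
  then have "(transpose_mat B * B) $$ (0,0) = 1" using n by simp
  moreover have "(transpose_mat B * B) $$ (0,0) = (\<Sum>i<n. (B $$ (i,0))\<^sup>2)"
    using B n by (simp add: scalar_prod_def row_def col_def lessThan_atLeast0 power2_eq_square)
  ultimately show ?thesis by simp
qed

lemma shilov_IV: assumes n3: "3 \<le> n"
  shows "shilov_boundary (TypeIV n) = {z \<in> cartan_space (TypeIV n). \<forall>l. 1 \<le> l \<and> l \<le> cartan_rank (TypeIV n) \<longrightarrow>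
        Delta_comp (TypeIV n) l z z = of_nat (cartan_rank (TypeIV n) choose l)}"
proof -
  have rhs: "{z \<in> cartan_space (TypeIV n). \<forall>l. 1 \<le> l \<and> l \<le> cartan_rank (TypeIV n) \<longrightarrow>
        Delta_comp (TypeIV n) l z z = of_nat (cartan_rank (TypeIV n) choose l)}
     = {z \<in> carrier_mat n 1. sesq z z = 1 \<and> qform z * cnj (qform z) = 1}"
    using cond_IV by auto
  have n0: "n > 0" using n3 by simp
  show ?thesis unfolding rhs
  proof (intro equalityI subsetI)
    fix z assume "z \<in> shilov_boundary (TypeIV n)"
    then obtain c A where cA: "cmod c = 1" "SO_mat n A" "z = c \<cdot>\<^sub>m (A * cartan_e (TypeIV n))"
      unfolding shilov_boundary_def by auto
    obtain B :: "real mat" where B: "B \<in> carrier_mat n n" "B * transpose_mat B = 1\<^sub>m n" "A = map_mat complex_of_real B"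
      using cA(2) unfolding SO_mat_def by auto
    have zc: "z \<in> carrier_mat n 1" using cA(3) B(1,3) by simp
    have zi: "z $$ (i,0) = c * complex_of_real (B $$ (i,0))" if "i < n" for i
      using cA(3) B Ae_index[OF B(1) that] that by simp
    have cc: "c * cnj c = 1" using cA(1) by (metis complex_norm_square mult.commute of_real_1 power_one)
    have s1: "(\<Sum>i<n. (B $$ (i,0))\<^sup>2) = 1" by (rule col0_norm[OF B(1,2) n0])
    have "sesq z z = (\<Sum>i<n. (c * cnj c) * complex_of_real ((B $$ (i,0))\<^sup>2))"
      unfolding sesq_def using zc zi by (intro sum.cong, auto simp: power2_eq_square algebra_simps)
    also have "\<dots> = complex_of_real (\<Sum>i<n. (B $$ (i,0))\<^sup>2)" unfolding cc by simp
    finally have ss: "sesq z z = 1" using s1 by simp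
    have "qform z = (\<Sum>i<n. c\<^sup>2 * complex_of_real ((B $$ (i,0))\<^sup>2))"
      unfolding qform_def using zc zi by (intro sum.cong, auto simp: power2_eq_square algebra_simps)
    also have "\<dots> = c\<^sup>2 * complex_of_real (\<Sum>i<n. (B $$ (i,0))\<^sup>2)" by (simp add: sum_distrib_left)
    finally have q: "qform z = c\<^sup>2" using s1 by simp
    have "qform z * cnj (qform z) = (c * cnj c)\<^sup>2" unfolding q by (simp add: power2_eq_square algebra_simps)
    then have "qform z * cnj (qform z) = 1" unfolding cc by simp
    then show "z \<in> {z \<in> carrier_mat n 1. sesq z z = 1 \<and> qform z * cnj (qform z) = 1}" using zc ss by simp
  next
    fix z assume "z \<in> {z \<in> carrier_mat n 1. sesq z z = 1 \<and> qform z * cnj (qform z) = 1}"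
    then have zc: "z \<in> carrier_mat n 1" and ss: "sesq z z = 1" and qq: "qform z * cnj (qform z) = 1" by auto
    define q where "q = qform z"
    define c where "c = csqrt q"
    have c2: "c\<^sup>2 = q" unfolding c_def by simp
    have "complex_of_real ((cmod q)\<^sup>2) = q * cnj q" by (rule complex_norm_square)
    then have "complex_of_real ((cmod q)\<^sup>2) = 1" using qq unfolding q_def by simp
    then have "(cmod q)\<^sup>2 = 1" by (metis of_real_1 of_real_eq_iff)
    then have mq: "cmod q = 1" using norm_ge_zero[of q] by (auto simp: power2_eq_1_iff)
    have "(cmod c)\<^sup>2 = 1" using c2 mq by (metis norm_power)
    then have mc: "cmod c = 1" using norm_ge_zero[of c] by (auto simp: power2_eq_1_iff)
    then have c0: "c \<noteq> 0" by auto
    have cc: "c * cnj c = 1" using mc by (metis complex_norm_square mult.commute of_real_1 power_one)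
    define u where "u = (\<lambda>i. z $$ (i,0) / c)"
    have zu: "z $$ (i,0) = c * u i" for i unfolding u_def using c0 by simp
    have dz: "dim_row z = n" using zc by simp
    have su2: "(\<Sum>i<n. (u i)\<^sup>2) = 1"
    proof -
      have "q = (\<Sum>i<n. c\<^sup>2 * (u i)\<^sup>2)" unfolding q_def qform_def dz zu by (simp add: power_mult_distrib)
      also have "\<dots> = c\<^sup>2 * (\<Sum>i<n. (u i)\<^sup>2)" by (simp add: sum_distrib_left)
      finally show ?thesis using c2 c0 mq by auto
    qed
    have suu: "(\<Sum>i<n. u i * cnj (u i)) = 1"
    proof -
      have "sesq z z = (\<Sum>i<n. (c * cnj c) * (u i * cnj (u i)))" unfolding sesq_def dz zu by (simp add: algebra_simps)
      then show ?thesis using ss unfolding cc by simp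
    qed
    have re1: "(\<Sum>i<n. (Re (u i))\<^sup>2 - (Im (u i))\<^sup>2) = 1"
      using arg_cong[OF su2, of Re] by (simp add: Re_sum power2_eq_square)
    have re2: "(\<Sum>i<n. (Re (u i))\<^sup>2 + (Im (u i))\<^sup>2) = 1"
      using arg_cong[OF suu, of Re] by (simp add: Re_sum power2_eq_square)
    have "(\<Sum>i<n. (Im (u i))\<^sup>2) = 0"
    proof -
      have "(\<Sum>i<n. (Re (u i))\<^sup>2 + (Im (u i))\<^sup>2) - (\<Sum>i<n. (Re (u i))\<^sup>2 - (Im (u i))\<^sup>2) = 2 * (\<Sum>i<n. (Im (u i))\<^sup>2)"
        by (simp add: sum_subtractf[symmetric] sum_distrib_left)
      then show ?thesis using re1 re2 by simp
    qed
    then have im0: "\<forall>i\<in>{..<n}. (Im (u i))\<^sup>2 = 0" by (subst sum_nonneg_eq_0_iff[symmetric], auto)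
    define x where "x = (\<lambda>i. Re (u i))"
    have ux: "u i = complex_of_real (x i)" if "i < n" for i
      using im0 that unfolding x_def by (simp add: complex_eq_iff)
    have x1: "(\<Sum>i<n. (x i)\<^sup>2) = 1"
    proof -
      have "(\<Sum>i<n. (x i)\<^sup>2) = (\<Sum>i<n. (Re (u i))\<^sup>2 - (Im (u i))\<^sup>2)" unfolding x_def using im0 by (intro sum.cong, auto)
      then show ?thesis using re1 by simp
    qed
    obtain B :: "real mat" where B: "B \<in> carrier_mat n n" "B * transpose_mat B = 1\<^sub>m n" "det B = 1" "\<forall>i<n. B $$ (i,0) = x i"
      using exists_SO_col[OF _ x1] n3 by auto
    define A where "A = map_mat complex_of_real B"
    have SO: "SO_mat n A" unfolding SO_mat_def A_def using B by auto
    have ze: "z = c \<cdot>\<^sub>m (A * cartan_e (TypeIV n))"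
    proof (rule eq_matI)
      fix i j assume "i < dim_row (c \<cdot>\<^sub>m (A * cartan_e (TypeIV n)))" "j < dim_col (c \<cdot>\<^sub>m (A * cartan_e (TypeIV n)))"
      then have i: "i < n" and j: "j = 0" unfolding A_def using B(1) by auto
      show "z $$ (i, j) = (c \<cdot>\<^sub>m (A * cartan_e (TypeIV n))) $$ (i, j)"
        using i j B Ae_index[OF B(1) i] zu[of i] ux[OF i] unfolding A_def by simp
    qed (use zc B(1) in \<open>auto simp: A_def\<close>)
    have kK: "(\<lambda>w. c \<cdot>\<^sub>m (A * w)) \<in> cartan_K (TypeIV n)" using mc SO by auto
    show "z \<in> shilov_boundary (TypeIV n)" unfolding shilov_boundary_def
      by (rule CollectI, rule exI[of _ "\<lambda>w. c \<cdot>\<^sub>m (A * w)"], rule conjI[OF _ kK], simp add: ze)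
  qed
qed

theorem lemma2p1:
  fixes C :: cartan_type
  assumes "valid_cartan C"
  shows "shilov_boundary C =
    {z \<in> cartan_space C. \<forall>l. 1 \<le> l \<and> l \<le> cartan_rank C \<longrightarrow>
        Delta_comp C l z z = of_nat (cartan_rank C choose l)}"
proof (cases C)
  case (TypeI m n)
  then show ?thesis using assms shilov_I[of m n] by simp
next
  case (TypeII n)
  then show ?thesis using assms shilov_II[of n] by simp
next
  case (TypeIII n)
  then show ?thesis using assms shilov_III[of n] by simp
next
  case (TypeIV n)
  then show ?thesis using assms shilov_IV[of n] by simp
qed

end
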